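(* Let $p>q$, $\theta\in(0,\frac{\pi}{2})$, and let $f$ be a positive smooth function on $\mathcal{C}^n_\theta$. If $h_1,h_2$ are two positive, smooth, strictly convex solutions of $$\det(\nabla^2h+hI)=f\,h^{p-1}(h^2+|\nabla h|^2)^{\frac{n+1-q}{2}}\ \text{ in }\mathcal{C}^n_\theta,\qquad \nabla_\mu h=\cot\theta\,h\ \text{ on }\partial\mathcal{C}^n_\theta,$$ then $h_1\equiv h_2$.
   Context: $\mathbb{R}^{n+1}_+=\{y:\langle y,E_{n+1}\rangle>0\}$, $e:=-E_{n+1}$, $\mathcal{C}^n_\theta=\{\zeta\in\overline{\mathbb{R}^{n+1}_+}:|\zeta-\cos\theta\,e|=1\}$ with its induced metric; $\nabla,\nabla^2$ are the gradient and covariant Hessian, $I$ the identity, $\mu$ the unit outward co-normal of $\partial\mathcal{C}^n_\theta$. Strictly convex means $\nabla^2h+hI>0$. *)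

theory Defs
  imports "HOL-Analysis.Analysis"
begin

definition partial_deriv :: "'m::finite \<Rightarrow> (real^'m \<Rightarrow> real) \<Rightarrow> real^'m \<Rightarrow> real" where
  "partial_deriv i f x = deriv (\<lambda>t. f (x + t *\<^sub>R axis i 1)) 0"

fun iter_partial :: "'m::finite list \<Rightarrow> (real^'m \<Rightarrow> real) \<Rightarrow> real^'m \<Rightarrow> real" where
  "iter_partial [] f = f"
| "iter_partial (i # is) f = partial_deriv i (iter_partial is f)"

definition cinf_on :: "(real^'m::finite) set \<Rightarrow> (real^'m \<Rightarrow> real) \<Rightarrow> bool" where
  "cinf_on U f \<longleftrightarrow> open U \<and>
     (\<forall>is. continuous_on U (iter_partial is f) \<and>
        (\<forall>i. \<forall>x\<in>U. (\<lambda>t. iter_partial is f (x + t *\<^sub>R axis i 1)) field_differentiable (at 0)))"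

definition smooth_upto :: "(real^'m::finite) set \<Rightarrow> (real^'m \<Rightarrow> real) \<Rightarrow> bool" where
  "smooth_upto S f \<longleftrightarrow> (\<exists>U. S \<subseteq> U \<and> cinf_on U f)"

definition egrad :: "(real^'m::finite \<Rightarrow> real) \<Rightarrow> real^'m \<Rightarrow> real^'m" where
  "egrad f x = (\<chi> i. partial_deriv i f x)"

definition ehess :: "(real^'m::finite \<Rightarrow> real) \<Rightarrow> real^'m \<Rightarrow> real^'m^'m" where
  "ehess f x = (\<chi> i j. partial_deriv i (partial_deriv j f) x)"

definition outer :: "real^'m::finite \<Rightarrow> real^'m \<Rightarrow> real^'m^'m" where
  "outer v w = (\<chi> i j. v $ i * w $ j)"

definition tproj :: "real^'m::finite \<Rightarrow> real^'m^'m" where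
  "tproj nu = mat 1 - outer nu nu"

text \<open>Coordinate k plays the role of E_{n+1}; e = - E_{n+1}.\<close>
definition cap_e :: "'m::finite \<Rightarrow> real^'m" where
  "cap_e k = - axis k 1"

definition cap_center :: "real \<Rightarrow> 'm::finite \<Rightarrow> real^'m" where
  "cap_center \<theta> k = cos \<theta> *\<^sub>R cap_e k"

definition cap :: "real \<Rightarrow> 'm::finite \<Rightarrow> (real^'m) set" where
  "cap \<theta> k = {\<zeta>. \<zeta> $ k \<ge> 0 \<and> norm (\<zeta> - cap_center \<theta> k) = 1}"

definition cap_interior :: "real \<Rightarrow> 'm::finite \<Rightarrow> (real^'m) set" where
  "cap_interior \<theta> k = {\<zeta> \<in> cap \<theta> k. \<zeta> $ k > 0}"

definition cap_bdry :: "real \<Rightarrow> 'm::finite \<Rightarrow> (real^'m) set" where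
  "cap_bdry \<theta> k = {\<zeta> \<in> cap \<theta> k. \<zeta> $ k = 0}"

definition cap_normal :: "real \<Rightarrow> 'm::finite \<Rightarrow> real^'m \<Rightarrow> real^'m" where
  "cap_normal \<theta> k \<zeta> = \<zeta> - cap_center \<theta> k"

definition cov_grad :: "real \<Rightarrow> 'm::finite \<Rightarrow> (real^'m \<Rightarrow> real) \<Rightarrow> real^'m \<Rightarrow> real^'m" where
  "cov_grad \<theta> k G \<zeta> = tproj (cap_normal \<theta> k \<zeta>) *v egrad G \<zeta>"

text \<open>Covariant Hessian on the cap of the restriction of G (Gauss formula for the unit sphere),
  as a symmetric matrix acting on the tangent space and vanishing on the normal direction.\<close>
definition cov_hess :: "real \<Rightarrow> 'm::finite \<Rightarrow> (real^'m \<Rightarrow> real) \<Rightarrow> real^'m \<Rightarrow> real^'m^'m" where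
  "cov_hess \<theta> k G \<zeta> =
     (let nu = cap_normal \<theta> k \<zeta>; P = tproj nu
      in P ** (ehess G \<zeta> - (egrad G \<zeta> \<bullet> nu) *\<^sub>R mat 1) ** P)"

definition cov_W :: "real \<Rightarrow> 'm::finite \<Rightarrow> (real^'m \<Rightarrow> real) \<Rightarrow> real^'m \<Rightarrow> real^'m^'m" where
  "cov_W \<theta> k G \<zeta> = cov_hess \<theta> k G \<zeta> + G \<zeta> *\<^sub>R tproj (cap_normal \<theta> k \<zeta>)"

text \<open>Determinant of nabla^2 h + h I as an endomorphism of the tangent space.\<close>
definition cov_det :: "real \<Rightarrow> 'm::finite \<Rightarrow> (real^'m \<Rightarrow> real) \<Rightarrow> real^'m \<Rightarrow> real" where
  "cov_det \<theta> k G \<zeta> =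
     det (cov_W \<theta> k G \<zeta> + outer (cap_normal \<theta> k \<zeta>) (cap_normal \<theta> k \<zeta>))"

definition strictly_convex_cap :: "real \<Rightarrow> 'm::finite \<Rightarrow> (real^'m \<Rightarrow> real) \<Rightarrow> bool" where
  "strictly_convex_cap \<theta> k G \<longleftrightarrow>
     (\<forall>\<zeta>\<in>cap \<theta> k. \<forall>v. v \<bullet> cap_normal \<theta> k \<zeta> = 0 \<and> v \<noteq> 0 \<longrightarrow>
         v \<bullet> (cov_W \<theta> k G \<zeta> *v v) > 0)"

text \<open>Unit outward co-normal of the boundary of the cap (tangent to the sphere, normal to the
  boundary, pointing out of the cap, i.e. towards decreasing coordinate k).\<close>
definition cap_conormal :: "real \<Rightarrow> 'm::finite \<Rightarrow> real^'m \<Rightarrow> real^'m" where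
  "cap_conormal \<theta> k \<zeta> =
     (let w = tproj (cap_normal \<theta> k \<zeta>) *v axis k 1 in - (1 / norm w) *\<^sub>R w)"

definition is_cap_solution ::
    "real \<Rightarrow> 'm::finite \<Rightarrow> real \<Rightarrow> real \<Rightarrow> (real^'m \<Rightarrow> real) \<Rightarrow> (real^'m \<Rightarrow> real) \<Rightarrow> bool" where
  "is_cap_solution \<theta> k p q f h \<longleftrightarrow>
     smooth_upto (cap \<theta> k) h \<and>
     (\<forall>\<zeta>\<in>cap \<theta> k. h \<zeta> > 0) \<and>
     strictly_convex_cap \<theta> k h \<and>
     (\<forall>\<zeta>\<in>cap_interior \<theta> k.
        cov_det \<theta> k h \<zeta> =
          f \<zeta> * h \<zeta> powr (p - 1) *
          ((h \<zeta>)\<^sup>2 + (norm (cov_grad \<theta> k h \<zeta>))\<^sup>2) powr ((real CARD('m) - q) / 2)) \<and>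
     (\<forall>\<zeta>\<in>cap_bdry \<theta> k.
        cov_grad \<theta> k h \<zeta> \<bullet> cap_conormal \<theta> k \<zeta> = cot \<theta> * h \<zeta>)"

end

theory Submission
  imports Defs
begin

definition C1on :: "(real^'m::finite) set \<Rightarrow> (real^'m \<Rightarrow> real) \<Rightarrow> bool" where
  "C1on U G \<longleftrightarrow> open U \<and> continuous_on U G \<and> (\<forall>i. continuous_on U (partial_deriv i G)) \<and>
     (\<forall>i. \<forall>x\<in>U. (\<lambda>t. G (x + t *\<^sub>R axis i 1)) field_differentiable (at 0))"

lemma iter_partial_append: "iter_partial (xs @ ys) f = iter_partial xs (iter_partial ys f)"
  by (induction xs) auto

lemma cinf_C1: "cinf_on U G \<Longrightarrow> C1on U G"
  unfolding cinf_on_def C1on_def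
proof (intro conjI allI ballI; (elim conjE)?)
  fix i x assume "\<forall>is. continuous_on U (iter_partial is G) \<and>
        (\<forall>i. \<forall>x\<in>U. (\<lambda>t. iter_partial is G (x + t *\<^sub>R axis i 1)) field_differentiable at 0)"
  note A = spec[OF this]
  show "continuous_on U G" using A[of "[]"] by simp
  show "continuous_on U (partial_deriv i G)" using A[of "[i]"] by simp
  show "x \<in> U \<Longrightarrow> (\<lambda>t. G (x + t *\<^sub>R axis i 1)) field_differentiable at 0" using A[of "[]"] by simp
qed

lemma cinf_pd: "cinf_on U G \<Longrightarrow> cinf_on U (partial_deriv j G)"
  unfolding cinf_on_def
proof (intro conjI allI ballI; (elim conjE)?)
  fix "is" i x assume "\<forall>is. continuous_on U (iter_partial is G) \<and>
        (\<forall>i. \<forall>x\<in>U. (\<lambda>t. iter_partial is G (x + t *\<^sub>R axis i 1)) field_differentiable at 0)"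
  note A = spec[OF this, of "is @ [j]", unfolded iter_partial_append, simplified]
  show "continuous_on U (iter_partial is (partial_deriv j G))" using A by simp
  show "x \<in> U \<Longrightarrow> (\<lambda>t. iter_partial is (partial_deriv j G) (x + t *\<^sub>R axis i 1)) field_differentiable at 0" using A by simp
qed

lemma cinf_C1_pd: "cinf_on U G \<Longrightarrow> C1on U (partial_deriv j G)"
  by (simp add: cinf_C1 cinf_pd)

lemma line_deriv:
  assumes "C1on U G" "x + s *\<^sub>R axis i 1 \<in> U"
  shows "((\<lambda>t. G (x + t *\<^sub>R axis i 1)) has_real_derivative partial_deriv i G (x + s *\<^sub>R axis i 1)) (at s)"
proof -
  define y where "y = x + s *\<^sub>R axis i 1"
  have "(\<lambda>t. G (y + t *\<^sub>R axis i 1)) field_differentiable (at 0)"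
    using assms unfolding C1on_def y_def by blast
  then have "((\<lambda>t. G (y + t *\<^sub>R axis i 1)) has_real_derivative partial_deriv i G y) (at 0)"
    unfolding partial_deriv_def by (simp add: DERIV_deriv_iff_field_differentiable)
  then have "((\<lambda>t. G (y + t *\<^sub>R axis i 1)) has_real_derivative partial_deriv i G y) (at (s + (-s)))"
    by simp
  then have "((\<lambda>t. G (y + (t + (-s)) *\<^sub>R axis i 1)) has_real_derivative partial_deriv i G y) (at s)"
    by (subst (asm) DERIV_shift) simp
  moreover have "(\<lambda>t. G (y + (t + (-s)) *\<^sub>R axis i 1)) = (\<lambda>t. G (x + t *\<^sub>R axis i 1))"
    by (simp add: y_def algebra_simps)
  ultimately show ?thesis by (simp add: y_def)
qed

lemma mvt_bound:
  fixes g g' :: "real \<Rightarrow> real"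
  assumes D: "\<And>t. \<bar>t\<bar> \<le> \<bar>b\<bar> \<Longrightarrow> (g has_real_derivative g' t) (at t)"
    and B: "\<And>t. \<bar>t\<bar> \<le> \<bar>b\<bar> \<Longrightarrow> \<bar>g' t - L\<bar> \<le> B"
  shows "\<bar>g b - g 0 - b * L\<bar> \<le> B * \<bar>b\<bar>"
proof (cases "b = 0")
  case True then show ?thesis by simp
next
  case False
  show ?thesis
  proof (cases "b > 0")
    case True
    then obtain z where z: "0 < z" "z < b" "g b - g 0 = (b - 0) * g' z"
      using MVT2[of 0 b g g'] D by force
    have "\<bar>g' z - L\<bar> \<le> B" using B z by auto
    then show ?thesis using z True
      by (metis abs_mult abs_of_pos diff_zero mult.commute mult_le_cancel_left_pos right_diff_distrib')
  next
    case False
    with \<open>b \<noteq> 0\<close> have "b < 0" by simp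
    then obtain z where z: "b < z" "z < 0" "g 0 - g b = (0 - b) * g' z"
      using MVT2[of b 0 g g'] D by force
    have "\<bar>g' z - L\<bar> \<le> B" using B z by auto
    moreover have "g b - g 0 - b * L = b * (g' z - L)" using z by (simp add: algebra_simps)
    ultimately show ?thesis using \<open>b < 0\<close>
      by (simp add: abs_mult mult.commute)
  qed
qed

lemma C1_frechet:
  fixes G :: "real^'m::finite \<Rightarrow> real"
  assumes C: "C1on U G" and xU: "x \<in> U"
  shows "(G has_derivative (\<lambda>v. egrad G x \<bullet> v)) (at x)"
proof -
  have opU: "open U" using C unfolding C1on_def by blast
  have claim: "\<forall>e>0. \<exists>d>0. \<forall>h. norm h < d \<longrightarrow>
      \<bar>G (x + (\<Sum>i\<in>S. h$i *\<^sub>R axis i 1)) - G x - (\<Sum>i\<in>S. partial_deriv i G x * h$i)\<bar> \<le> e * norm h"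
    if "finite S" for S
    using that
  proof (induction S rule: finite_induct)
    case empty
    then show ?case by (auto intro!: exI[of _ 1])
  next
    case (insert a S)
    show ?case
    proof (intro allI impI)
      fix e :: real assume e: "e > 0"
      obtain d1 where d1: "d1 > 0" "\<And>h. norm h < d1 \<Longrightarrow>
          \<bar>G (x + (\<Sum>i\<in>S. h$i *\<^sub>R axis i 1)) - G x - (\<Sum>i\<in>S. partial_deriv i G x * h$i)\<bar> \<le> e/2 * norm h"
        using insert.IH e by (meson half_gt_zero)
      obtain r where r: "r > 0" "ball x r \<subseteq> U" using opU xU open_contains_ball by blast
      have "continuous (at x) (partial_deriv a G)"
        using C xU opU unfolding C1on_def by (meson continuous_on_eq_continuous_at)
      then obtain d2 where d2: "d2 > 0" "\<And>y. dist y x < d2 \<Longrightarrow> dist (partial_deriv a G y) (partial_deriv a G x) < e/2"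
        unfolding continuous_at_eps_delta using e by (meson half_gt_zero)
      define d where "d = min d1 (min r d2)"
      show "\<exists>d>0. \<forall>h. norm h < d \<longrightarrow>
          \<bar>G (x + (\<Sum>i\<in>insert a S. h$i *\<^sub>R axis i 1)) - G x - (\<Sum>i\<in>insert a S. partial_deriv i G x * h$i)\<bar> \<le> e * norm h"
      proof (intro exI[of _ d] conjI allI impI)
        show "d > 0" using d1 r d2 by (simp add: d_def)
        fix h :: "real^'m" assume h: "norm h < d"
        define y0 where "y0 = x + (\<Sum>i\<in>S. h$i *\<^sub>R axis i 1)"
        have nrm: "norm ((\<Sum>i\<in>S. h$i *\<^sub>R (axis i 1::real^'m)) + t *\<^sub>R axis a 1) \<le> norm h" if "\<bar>t\<bar> \<le> \<bar>h$a\<bar>" for t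
        proof (rule norm_le_componentwise_cart)
          fix j
          show "norm (((\<Sum>i\<in>S. h$i *\<^sub>R (axis i 1::real^'m)) + t *\<^sub>R axis a 1) $ j) \<le> norm (h $ j)"
            using insert.hyps that
            by (cases "j \<in> S"; cases "j = a") (auto simp: axis_def if_distrib sum.delta' real_norm_def cong: if_cong)
        qed
        have inU: "y0 + t *\<^sub>R axis a 1 \<in> U" and cl: "dist (y0 + t *\<^sub>R axis a 1) x < d2"
          if "\<bar>t\<bar> \<le> \<bar>h$a\<bar>" for t
        proof -
          have "dist (y0 + t *\<^sub>R axis a 1) x \<le> norm h"
            using nrm[OF that] by (simp add: y0_def dist_norm add.assoc)
          then show "y0 + t *\<^sub>R axis a 1 \<in> U" "dist (y0 + t *\<^sub>R axis a 1) x < d2"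
            using h r d_def by (auto simp: dist_commute intro!: subsetD[OF r(2)])
        qed
        have step: "\<bar>G (y0 + h$a *\<^sub>R axis a 1) - G (y0 + 0 *\<^sub>R axis a 1) - h$a * partial_deriv a G x\<bar> \<le> e/2 * \<bar>h$a\<bar>"
        proof (rule mvt_bound[where g = "\<lambda>t. G (y0 + t *\<^sub>R axis a 1)" and g' = "\<lambda>t. partial_deriv a G (y0 + t *\<^sub>R axis a 1)"])
          fix t assume t: "\<bar>t\<bar> \<le> \<bar>h$a\<bar>"
          show "((\<lambda>t. G (y0 + t *\<^sub>R axis a 1)) has_real_derivative partial_deriv a G (y0 + t *\<^sub>R axis a 1)) (at t)"
            by (rule line_deriv[OF C inU[OF t]])
          show "\<bar>partial_deriv a G (y0 + t *\<^sub>R axis a 1) - partial_deriv a G x\<bar> \<le> e / 2"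
            using d2(2)[OF cl[OF t]] by (simp add: dist_real_def)
        qed
        have ha: "\<bar>h$a\<bar> \<le> norm h" by (metis component_le_norm_cart real_norm_def)
        have sumeq: "x + (\<Sum>i\<in>insert a S. h$i *\<^sub>R axis i 1) = y0 + h$a *\<^sub>R axis a 1"
          using insert.hyps by (simp add: y0_def algebra_simps)
        have sumeq2: "(\<Sum>i\<in>insert a S. partial_deriv i G x * h$i) = h$a * partial_deriv a G x + (\<Sum>i\<in>S. partial_deriv i G x * h$i)"
          using insert.hyps by simp
        have IH: "\<bar>G y0 - G x - (\<Sum>i\<in>S. partial_deriv i G x * h$i)\<bar> \<le> e/2 * norm h"
          using d1(2)[of h] h by (simp add: d_def y0_def)
        have "e/2 * \<bar>h$a\<bar> \<le> e/2 * norm h" using ha e by simp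
        then show "\<bar>G (x + (\<Sum>i\<in>insert a S. h$i *\<^sub>R axis i 1)) - G x - (\<Sum>i\<in>insert a S. partial_deriv i G x * h$i)\<bar> \<le> e * norm h"
          unfolding sumeq sumeq2 using step IH by simp (smt (verit))
      qed
    qed
  qed
  have bl: "bounded_linear (\<lambda>v. egrad G x \<bullet> v)" by (rule bounded_linear_inner_right)
  show ?thesis
    unfolding has_derivative_at_alt
  proof (intro conjI bl allI impI)
    fix e :: real assume "e > 0"
    then obtain d where d: "d > 0" "\<And>h. norm h < d \<Longrightarrow>
      \<bar>G (x + (\<Sum>i\<in>UNIV. h$i *\<^sub>R axis i 1)) - G x - (\<Sum>i\<in>UNIV. partial_deriv i G x * h$i)\<bar> \<le> e * norm h"
      using claim[of UNIV] by auto
    have be: "(\<Sum>i\<in>UNIV. h$i *\<^sub>R axis i 1) = h" for h :: "real^'m"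
      using basis_expansion[of h] by (simp add: scalar_mult_eq_scaleR)
    have ie: "(\<Sum>i\<in>UNIV. partial_deriv i G x * h$i) = egrad G x \<bullet> h" for h
      by (simp add: egrad_def inner_vec_def)
    show "\<exists>d>0. \<forall>y. norm (y - x) < d \<longrightarrow> norm (G y - G x - egrad G x \<bullet> (y - x)) \<le> e * norm (y - x)"
      using d be ie by (metis add.commute diff_add_cancel real_norm_def)
  qed
qed


lemma curve_chain:
  assumes "C1on U G" "\<gamma> t \<in> U" "(\<gamma> has_vector_derivative \<gamma>') (at t)"
  shows "((\<lambda>s. G (\<gamma> s)) has_real_derivative (egrad G (\<gamma> t) \<bullet> \<gamma>')) (at t)"
proof -
  have "(G has_derivative (\<lambda>v. egrad G (\<gamma> t) \<bullet> v)) (at (\<gamma> t))" by (rule C1_frechet[OF assms(1,2)])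
  then have "(G has_derivative (\<lambda>v. egrad G (\<gamma> t) \<bullet> v)) (at (\<gamma> t) within \<gamma> ` UNIV)"
    by (rule has_derivative_at_withinI)
  from vector_derivative_diff_chain_within[OF assms(3) this] show ?thesis
    by (simp add: has_real_derivative_iff_has_vector_derivative o_def)
qed

lemma gamma_deriv:
  fixes a u v :: "real^'m::finite"
  shows "((\<lambda>t. a + cos t *\<^sub>R u + sin t *\<^sub>R v) has_vector_derivative (- sin t *\<^sub>R u + cos t *\<^sub>R v)) (at t)"
  by (auto intro!: derivative_eq_intros)

lemma first_order_right:
  fixes \<phi> :: "real \<Rightarrow> real"
  assumes "(\<phi> has_real_derivative D) (at 0)" "\<phi> 0 = 0" "d > 0" "\<And>t. 0 < t \<Longrightarrow> t < d \<Longrightarrow> \<phi> t \<le> 0"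
  shows "D \<le> 0"
proof (rule ccontr)
  assume "\<not> D \<le> 0"
  then obtain d' where d': "d' > 0" "\<And>h. 0 < h \<Longrightarrow> h < d' \<Longrightarrow> \<phi> 0 < \<phi> (0 + h)"
    using DERIV_pos_inc_right[OF assms(1)] by force
  define h where "h = min d d' / 2"
  have "0 < h" "h < d" "h < d'" using d' assms(3) by (auto simp: h_def)
  then show False using d'(2)[of h] assms(2) assms(4)[of h] by simp
qed

lemma second_order_right:
  fixes \<phi> \<phi>' :: "real \<Rightarrow> real"
  assumes D: "\<And>t. \<bar>t\<bar> < d \<Longrightarrow> (\<phi> has_real_derivative \<phi>' t) (at t)"
    and z: "\<phi>' 0 = 0" and L: "(\<phi>' has_real_derivative L) (at 0)" and p0: "\<phi> 0 = 0" and "d > 0"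
    and le: "\<And>t. 0 < t \<Longrightarrow> t < d \<Longrightarrow> \<phi> t \<le> 0"
  shows "L \<le> 0"
proof (rule ccontr)
  assume "\<not> L \<le> 0"
  then obtain d' where d': "d' > 0" "\<And>h. 0 < h \<Longrightarrow> h < d' \<Longrightarrow> \<phi>' 0 < \<phi>' (0 + h)"
    using DERIV_pos_inc_right[OF L] by force
  define h where "h = min d d' / 2"
  have h: "0 < h" "h < d" "h < d'" using d' \<open>d > 0\<close> by (auto simp: h_def)
  have D': "(\<phi> has_real_derivative \<phi>' x) (at x)" if "0 \<le> x" "x \<le> h" for x
    using that h by (intro D) auto
  obtain w where w: "0 < w" "w < h" "\<phi> h - \<phi> 0 = (h - 0) * \<phi>' w"
    using MVT2[of 0 h \<phi> \<phi>', OF h(1) D'] by blast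
  have "\<phi>' w > 0" using d'(2)[of w] w h z by simp
  then have "\<phi> h > 0" using w h p0 by simp
  then show False using le[of h] h by simp
qed

lemma mixed_mvt:
  fixes G :: "real^'m::finite \<Rightarrow> real"
  assumes G: "cinf_on U G"
    and box: "\<And>\<sigma> \<tau>. 0 \<le> \<sigma> \<Longrightarrow> \<sigma> \<le> s \<Longrightarrow> 0 \<le> \<tau> \<Longrightarrow> \<tau> \<le> t \<Longrightarrow> x + \<sigma> *\<^sub>R axis i 1 + \<tau> *\<^sub>R axis j 1 \<in> U"
    and s: "0 < s" and t: "0 < t"
  shows "\<exists>\<sigma> \<tau>. 0 < \<sigma> \<and> \<sigma> < s \<and> 0 < \<tau> \<and> \<tau> < t \<and>
    G (x + s *\<^sub>R axis i 1 + t *\<^sub>R axis j 1) - G (x + s *\<^sub>R axis i 1) - G (x + t *\<^sub>R axis j 1) + G x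
      = s * t * partial_deriv j (partial_deriv i G) (x + \<sigma> *\<^sub>R axis i 1 + \<tau> *\<^sub>R axis j 1)"
proof -
  have C: "C1on U G" by (rule cinf_C1[OF G])
  have Ci: "C1on U (partial_deriv i G)" by (rule cinf_C1_pd[OF G])
  define \<phi> where "\<phi> \<sigma> = G (x + t *\<^sub>R axis j 1 + \<sigma> *\<^sub>R axis i 1) - G (x + \<sigma> *\<^sub>R axis i 1)" for \<sigma>
  define \<phi>' where "\<phi>' \<sigma> = partial_deriv i G (x + t *\<^sub>R axis j 1 + \<sigma> *\<^sub>R axis i 1) - partial_deriv i G (x + \<sigma> *\<^sub>R axis i 1)" for \<sigma>
  have d\<phi>: "(\<phi> has_real_derivative \<phi>' \<sigma>) (at \<sigma>)" if "0 \<le> \<sigma>" "\<sigma> \<le> s" for \<sigma>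
  proof -
    have m1: "x + t *\<^sub>R axis j 1 + \<sigma> *\<^sub>R axis i 1 \<in> U"
      using box[OF that, of t] t by (simp add: add_ac)
    have m2: "x + \<sigma> *\<^sub>R axis i 1 \<in> U"
      using box[OF that, of 0] t by simp
    show ?thesis unfolding \<phi>_def[abs_def] \<phi>'_def
      by (intro DERIV_diff line_deriv[OF C m1] line_deriv[OF C m2])
  qed
  obtain \<sigma> where \<sigma>: "0 < \<sigma>" "\<sigma> < s" "\<phi> s - \<phi> 0 = (s - 0) * \<phi>' \<sigma>"
    using MVT2[of 0 s \<phi> \<phi>', OF s d\<phi>] by blast
  define \<psi> where "\<psi> \<tau> = partial_deriv i G (x + \<sigma> *\<^sub>R axis i 1 + \<tau> *\<^sub>R axis j 1)" for \<tau>
  have d\<psi>: "(\<psi> has_real_derivative partial_deriv j (partial_deriv i G) (x + \<sigma> *\<^sub>R axis i 1 + \<tau> *\<^sub>R axis j 1)) (at \<tau>)"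
    if "0 \<le> \<tau>" "\<tau> \<le> t" for \<tau>
    unfolding \<psi>_def[abs_def]
    by (rule line_deriv[OF Ci box]) (use that \<sigma> in auto)
  obtain \<tau> where \<tau>: "0 < \<tau>" "\<tau> < t" "\<psi> t - \<psi> 0 = (t - 0) * partial_deriv j (partial_deriv i G) (x + \<sigma> *\<^sub>R axis i 1 + \<tau> *\<^sub>R axis j 1)"
    using MVT2[of 0 t \<psi>, OF t d\<psi>] by blast
  have "\<phi>' \<sigma> = \<psi> t - \<psi> 0" unfolding \<phi>'_def \<psi>_def by (simp add: add_ac)
  moreover have "\<phi> s - \<phi> 0 = G (x + s *\<^sub>R axis i 1 + t *\<^sub>R axis j 1) - G (x + s *\<^sub>R axis i 1) - G (x + t *\<^sub>R axis j 1) + G x"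
    unfolding \<phi>_def by (simp add: add_ac)
  ultimately show ?thesis using \<sigma> \<tau> by (intro exI[of _ \<sigma>] exI[of _ \<tau>]) auto
qed


lemma schwarz:
  fixes G :: "real^'m::finite \<Rightarrow> real"
  assumes G: "cinf_on U G" and xU: "x \<in> U"
  shows "partial_deriv i (partial_deriv j G) x = partial_deriv j (partial_deriv i G) x"
proof (rule ccontr)
  assume ne: "partial_deriv i (partial_deriv j G) x \<noteq> partial_deriv j (partial_deriv i G) x"
  define F1 where "F1 = partial_deriv j (partial_deriv i G)"
  define F2 where "F2 = partial_deriv i (partial_deriv j G)"
  define \<epsilon> where "\<epsilon> = \<bar>F1 x - F2 x\<bar> / 2"
  have \<epsilon>: "\<epsilon> > 0" using ne by (simp add: \<epsilon>_def F1_def F2_def)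
  have opU: "open U" using G unfolding cinf_on_def by blast
  obtain r where r: "r > 0" "ball x r \<subseteq> U" using opU xU open_contains_ball by blast
  have c1: "continuous_on U F1" using G unfolding cinf_on_def F1_def by (metis iter_partial.simps)
  have c2: "continuous_on U F2" using G unfolding cinf_on_def F2_def by (metis iter_partial.simps)
  obtain d1 where d1: "d1 > 0" "\<And>y. dist y x < d1 \<Longrightarrow> dist (F1 y) (F1 x) < \<epsilon>"
    using c1 xU opU \<epsilon> unfolding continuous_on_eq_continuous_at[OF opU] continuous_at_eps_delta by meson
  obtain d2 where d2: "d2 > 0" "\<And>y. dist y x < d2 \<Longrightarrow> dist (F2 y) (F2 x) < \<epsilon>"
    using c2 xU opU \<epsilon> unfolding continuous_on_eq_continuous_at[OF opU] continuous_at_eps_delta by meson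
  define s where "s = min r (min d1 d2) / 3"
  have s: "s > 0" "2 * s < r" "2 * s < d1" "2 * s < d2" using r d1 d2 by (auto simp: s_def)
  have near: "dist (x + a *\<^sub>R axis k 1 + b *\<^sub>R axis l 1) x \<le> 2 * s"
    if "0 \<le> a" "a \<le> s" "0 \<le> b" "b \<le> s" for a b k l
  proof -
    have "norm (a *\<^sub>R (axis k 1 :: real^'m) + b *\<^sub>R axis l 1) \<le> norm (a *\<^sub>R (axis k 1 :: real^'m)) + norm (b *\<^sub>R (axis l 1 :: real^'m))"
      by (rule norm_triangle_ineq)
    also have "\<dots> \<le> 2 * s" using that by simp
    finally show ?thesis by (simp add: dist_norm add.assoc)
  qed
  have box: "x + a *\<^sub>R axis k 1 + b *\<^sub>R axis l 1 \<in> U"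
    if "0 \<le> a" "a \<le> s" "0 \<le> b" "b \<le> s" for a b k l
    using near[OF that, of k l] s r by (auto simp: dist_commute intro!: subsetD[OF r(2)])
  obtain \<sigma>1 \<tau>1 where A: "0 < \<sigma>1" "\<sigma>1 < s" "0 < \<tau>1" "\<tau>1 < s"
    "G (x + s *\<^sub>R axis i 1 + s *\<^sub>R axis j 1) - G (x + s *\<^sub>R axis i 1) - G (x + s *\<^sub>R axis j 1) + G x
      = s * s * F1 (x + \<sigma>1 *\<^sub>R axis i 1 + \<tau>1 *\<^sub>R axis j 1)"
    using mixed_mvt[OF G box s(1) s(1)] unfolding F1_def by blast
  obtain \<sigma>2 \<tau>2 where B: "0 < \<sigma>2" "\<sigma>2 < s" "0 < \<tau>2" "\<tau>2 < s"
    "G (x + s *\<^sub>R axis j 1 + s *\<^sub>R axis i 1) - G (x + s *\<^sub>R axis j 1) - G (x + s *\<^sub>R axis i 1) + G x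
      = s * s * F2 (x + \<sigma>2 *\<^sub>R axis j 1 + \<tau>2 *\<^sub>R axis i 1)"
    using mixed_mvt[OF G box s(1) s(1), of j i] unfolding F2_def by blast
  have "G (x + s *\<^sub>R axis j 1 + s *\<^sub>R axis i 1) = G (x + s *\<^sub>R axis i 1 + s *\<^sub>R axis j 1)"
    by (simp add: add_ac)
  then have "s * s * F1 (x + \<sigma>1 *\<^sub>R axis i 1 + \<tau>1 *\<^sub>R axis j 1) = s * s * F2 (x + \<sigma>2 *\<^sub>R axis j 1 + \<tau>2 *\<^sub>R axis i 1)"
    using A(5) B(5) by linarith
  then have eq: "F1 (x + \<sigma>1 *\<^sub>R axis i 1 + \<tau>1 *\<^sub>R axis j 1) = F2 (x + \<sigma>2 *\<^sub>R axis j 1 + \<tau>2 *\<^sub>R axis i 1)"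
    using s by simp
  have "dist (F1 (x + \<sigma>1 *\<^sub>R axis i 1 + \<tau>1 *\<^sub>R axis j 1)) (F1 x) < \<epsilon>"
    using near[of \<sigma>1 \<tau>1 i j] A s by (intro d1(2)) auto
  moreover have "dist (F2 (x + \<sigma>2 *\<^sub>R axis j 1 + \<tau>2 *\<^sub>R axis i 1)) (F2 x) < \<epsilon>"
    using near[of \<sigma>2 \<tau>2 j i] B s by (intro d2(2)) auto
  moreover have key: "\<And>p q r w::real. \<bar>p - q\<bar> < \<bar>q - r\<bar>/2 \<Longrightarrow> \<bar>w - r\<bar> < \<bar>q - r\<bar>/2 \<Longrightarrow> p = w \<Longrightarrow> False"
    by (simp add: abs_if split: if_split_asm)
  ultimately show False using eq unfolding \<epsilon>_def dist_real_def by (metis key)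
qed

lemma curve_second:
  fixes G :: "real^'m::finite \<Rightarrow> real" and a u v :: "real^'m"
  assumes G: "cinf_on U G" and x: "a + u \<in> U"
  shows "\<exists>d>0. \<forall>t. \<bar>t\<bar> < d \<longrightarrow> a + cos t *\<^sub>R u + sin t *\<^sub>R v \<in> U \<and>
      ((\<lambda>s. G (a + cos s *\<^sub>R u + sin s *\<^sub>R v)) has_real_derivative
         (egrad G (a + cos t *\<^sub>R u + sin t *\<^sub>R v) \<bullet> (- sin t *\<^sub>R u + cos t *\<^sub>R v))) (at t)"
    and "((\<lambda>t. egrad G (a + cos t *\<^sub>R u + sin t *\<^sub>R v) \<bullet> (- sin t *\<^sub>R u + cos t *\<^sub>R v))
          has_real_derivative (v \<bullet> (ehess G (a + u) *v v) - egrad G (a + u) \<bullet> u)) (at 0)"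
proof -
  define \<gamma> where "\<gamma> t = a + cos t *\<^sub>R u + sin t *\<^sub>R v" for t
  have C: "C1on U G" by (rule cinf_C1[OF G])
  have opU: "open U" using G unfolding cinf_on_def by blast
  obtain r where r: "r > 0" "ball (a + u) r \<subseteq> U" using opU x open_contains_ball by blast
  have "continuous (at 0) \<gamma>" unfolding \<gamma>_def by (intro continuous_intros)
  then obtain d where d: "d > 0" "\<And>t. dist t 0 < d \<Longrightarrow> dist (\<gamma> t) (\<gamma> 0) < r"
    unfolding continuous_at_eps_delta using r by meson
  have g0: "\<gamma> 0 = a + u" by (simp add: \<gamma>_def)
  have inU: "\<gamma> t \<in> U" if "\<bar>t\<bar> < d" for t
    using d(2)[of t] that g0 r by (auto simp: dist_commute intro!: subsetD[OF r(2)])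
  show "\<exists>d>0. \<forall>t. \<bar>t\<bar> < d \<longrightarrow> a + cos t *\<^sub>R u + sin t *\<^sub>R v \<in> U \<and>
      ((\<lambda>s. G (a + cos s *\<^sub>R u + sin s *\<^sub>R v)) has_real_derivative
         (egrad G (a + cos t *\<^sub>R u + sin t *\<^sub>R v) \<bullet> (- sin t *\<^sub>R u + cos t *\<^sub>R v))) (at t)"
  proof (intro exI[of _ d] conjI allI impI d(1))
    fix t :: real assume t: "\<bar>t\<bar> < d"
    show "a + cos t *\<^sub>R u + sin t *\<^sub>R v \<in> U" using inU[OF t] by (simp add: \<gamma>_def)
    show "((\<lambda>s. G (a + cos s *\<^sub>R u + sin s *\<^sub>R v)) has_real_derivative
         (egrad G (a + cos t *\<^sub>R u + sin t *\<^sub>R v) \<bullet> (- sin t *\<^sub>R u + cos t *\<^sub>R v))) (at t)"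
      using curve_chain[OF C _ gamma_deriv[of a u v t]] inU[OF t] by (simp add: \<gamma>_def)
  qed
  have fe: "(\<lambda>t. egrad G (\<gamma> t) \<bullet> (- sin t *\<^sub>R u + cos t *\<^sub>R v)) =
        (\<lambda>t. \<Sum>j\<in>UNIV. partial_deriv j G (\<gamma> t) * (- sin t * (u$j) + cos t * (v$j)))"
    by (simp add: egrad_def inner_vec_def)
  have dj: "((\<lambda>t. partial_deriv j G (\<gamma> t) * (- sin t * (u$j) + cos t * (v$j))) has_real_derivative
       (egrad (partial_deriv j G) (a + u) \<bullet> v) * (v$j) + partial_deriv j G (a + u) * (- (u$j))) (at 0)" for j
  proof -
    have "((\<lambda>t. partial_deriv j G (\<gamma> t)) has_real_derivative egrad (partial_deriv j G) (\<gamma> 0) \<bullet> (- sin 0 *\<^sub>R u + cos 0 *\<^sub>R v)) (at 0)"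
      unfolding \<gamma>_def by (rule curve_chain[OF cinf_C1_pd[OF G] _ gamma_deriv]) (use x in simp)
    then have A: "((\<lambda>t. partial_deriv j G (\<gamma> t)) has_real_derivative egrad (partial_deriv j G) (a + u) \<bullet> v) (at 0)"
      by (simp add: g0)
    have B: "((\<lambda>t. - sin t * (u$j) + cos t * (v$j)) has_real_derivative - (u$j)) (at 0)"
      by (auto intro!: derivative_eq_intros)
    show ?thesis using DERIV_mult[OF A B] by (simp add: g0 mult.commute)
  qed
  have "((\<lambda>t. \<Sum>j\<in>UNIV. partial_deriv j G (\<gamma> t) * (- sin t * (u$j) + cos t * (v$j))) has_real_derivative
       (\<Sum>j\<in>UNIV. (egrad (partial_deriv j G) (a + u) \<bullet> v) * (v$j) + partial_deriv j G (a + u) * (- (u$j)))) (at 0)"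
    by (rule DERIV_sum) (use dj in blast)
  moreover have "(\<Sum>j\<in>UNIV. (egrad (partial_deriv j G) (a + u) \<bullet> v) * (v$j) + partial_deriv j G (a + u) * (- (u$j)))
      = v \<bullet> (ehess G (a + u) *v v) - egrad G (a + u) \<bullet> u"
  proof -
    have "(\<Sum>j\<in>UNIV. (egrad (partial_deriv j G) (a + u) \<bullet> v) * (v$j)) = v \<bullet> (ehess G (a + u) *v v)"
      unfolding egrad_def ehess_def inner_vec_def matrix_vector_mult_def
      by (simp add: sum_distrib_left sum_distrib_right mult_ac) (subst sum.swap, simp add: mult_ac)
    moreover have "(\<Sum>j\<in>UNIV. partial_deriv j G (a + u) * (- (u$j))) = - (egrad G (a + u) \<bullet> u)"
      unfolding egrad_def inner_vec_def by (simp add: sum_negf)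
    ultimately show ?thesis by (simp add: sum_subtractf sum_negf)
  qed
  ultimately show "((\<lambda>t. egrad G (a + cos t *\<^sub>R u + sin t *\<^sub>R v) \<bullet> (- sin t *\<^sub>R u + cos t *\<^sub>R v))
          has_real_derivative (v \<bullet> (ehess G (a + u) *v v) - egrad G (a + u) \<bullet> u)) (at 0)"
    using fe unfolding \<gamma>_def by simp
qed


definition diagm :: "('n::finite \<Rightarrow> real) \<Rightarrow> real^'n^'n" where
  "diagm l = (\<chi> i j. if i = j then l i else 0)"

lemma congr_entry:
  fixes Q M :: "real^'n::finite^'n"
  shows "(transpose Q ** M ** Q) $ i $ j = column i Q \<bullet> (M *v column j Q)"
  unfolding matrix_matrix_mult_def transpose_def column_def inner_vec_def matrix_vector_mult_def
  by (simp add: sum_distrib_left sum_distrib_right mult_ac) (subst sum.swap, simp add: mult_ac)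

lemma quad_congr:
  fixes S M :: "real^'n::finite^'n"
  shows "x \<bullet> ((transpose S ** M ** S) *v x) = (S *v x) \<bullet> (M *v (S *v x))"
proof -
  have "x \<bullet> ((transpose S ** M ** S) *v x) = x \<bullet> (transpose S *v (M *v (S *v x)))"
    by (simp add: matrix_vector_mul_assoc matrix_mul_assoc)
  also have "\<dots> = (S *v x) \<bullet> (M *v (S *v x))"
    by (metis dot_lmul_matrix transpose_matrix_vector transpose_transpose vector_transpose_matrix)
  finally show ?thesis .
qed

lemma sym_quad:
  fixes A :: "real^'n::finite^'n"
  assumes "transpose A = A"
  shows "u \<bullet> (A *v w) = w \<bullet> (A *v u)"
  by (metis assms dot_lmul_matrix inner_commute transpose_matrix_vector)

lemma det_diagm: "det (diagm l) = (\<Prod>i\<in>UNIV. l i)"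
  by (subst det_diagonal) (auto simp: diagm_def)

lemma diagm_mult:
  fixes a b :: "'n::finite \<Rightarrow> real"
  shows "diagm a ** diagm b = diagm (\<lambda>i. a i * b i)"
proof -
  have "(\<Sum>k\<in>UNIV. (if i = k then a i else 0) * (if k = j then b k else 0)) = (if i = j then a i * b i else 0)" for i j :: 'n
  proof (cases "i = j")
    case True
    have "(\<Sum>k\<in>UNIV. (if i = k then a i else 0) * (if k = j then b k else 0)) = (\<Sum>k\<in>UNIV. if k = j then a i * b j else 0)"
      using True by (intro sum.cong) auto
    then show ?thesis using True by simp
  qed (auto intro!: sum.neutral)
  then show ?thesis unfolding diagm_def matrix_matrix_mult_def by (simp add: vec_eq_iff)
qed

lemma transpose_diagm[simp]: "transpose (diagm l) = diagm l"
  by (simp add: diagm_def transpose_def vec_eq_iff)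

lemma orth_det_sq:
  fixes Q :: "real^'n::finite^'n"
  assumes "orthogonal_matrix Q"
  shows "det Q * det Q = 1"
  using det_orthogonal_matrix[OF assms] by auto


lemma quad_expand:
  fixes A :: "real^'n::finite^'n"
  assumes "transpose A = A"
  shows "(u + t *\<^sub>R w) \<bullet> (A *v (u + t *\<^sub>R w)) = u \<bullet> (A *v u) + 2 * t * (w \<bullet> (A *v u)) + t\<^sup>2 * (w \<bullet> (A *v w))"
proof -
  have "u \<bullet> (A *v w) = w \<bullet> (A *v u)" by (rule sym_quad[OF assms])
  then show ?thesis
    by (simp add: matrix_vector_right_distrib matrix_vector_mult_scaleR inner_add_left inner_add_right
        algebra_simps power2_eq_square)
qed

lemma quad_zero_lin:
  fixes c K :: real
  assumes "\<And>t. 2 * t * c + t\<^sup>2 * K \<le> 0"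
  shows "c = 0"
proof (rule ccontr)
  assume "c \<noteq> 0"
  define t where "t = c / (\<bar>K\<bar> + 1)"
  have pos: "\<bar>K\<bar> + 1 > 0" by simp
  have c2: "c\<^sup>2 > 0" using \<open>c \<noteq> 0\<close> by simp
  have a1: "2 * t * c = 2 * (c\<^sup>2 / (\<bar>K\<bar> + 1))" unfolding t_def by (simp add: power2_eq_square)
  have "t\<^sup>2 * (- \<bar>K\<bar>) \<le> t\<^sup>2 * K" by (rule mult_left_mono) auto
  then have a2: "t\<^sup>2 * K \<ge> - (t\<^sup>2 * \<bar>K\<bar>)" by simp
  have a3: "t\<^sup>2 * \<bar>K\<bar> = (c\<^sup>2 / (\<bar>K\<bar> + 1)) * (\<bar>K\<bar> / (\<bar>K\<bar> + 1))"
    unfolding t_def by (simp add: power2_eq_square)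
  have a4: "\<bar>K\<bar> / (\<bar>K\<bar> + 1) \<le> 1" using pos by simp
  have a5: "c\<^sup>2 / (\<bar>K\<bar> + 1) > 0" using c2 pos by simp
  have "t\<^sup>2 * \<bar>K\<bar> \<le> c\<^sup>2 / (\<bar>K\<bar> + 1)" unfolding a3 using a4 a5
    by (metis mult.right_neutral mult_left_mono order_less_imp_le)
  then have "2 * t * c + t\<^sup>2 * K > 0" using a1 a2 a5 by linarith
  with assms[of t] show False by simp
qed

lemma spectral_subspace:
  fixes A :: "real^'n::finite^'n"
  assumes sym: "transpose A = A"
  shows "subspace V \<Longrightarrow> dim V = n \<Longrightarrow> (\<forall>x\<in>V. A *v x \<in> V) \<Longrightarrow>
    \<exists>B. B \<subseteq> V \<and> finite B \<and> card B = n \<and> pairwise orthogonal B \<and> (\<forall>b\<in>B. norm b = 1 \<and> (\<exists>l. A *v b = l *\<^sub>R b))"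
proof (induction n arbitrary: V)
  case 0
  then show ?case by (intro exI[of _ "{}"]) auto
next
  case (Suc n)
  note subV = Suc.prems(1) and dimV = Suc.prems(2) and inv = Suc.prems(3)
  have "\<exists>w\<in>V. w \<noteq> 0"
  proof (rule ccontr)
    assume "\<not> ?thesis"
    then have "V \<subseteq> {0}" by auto
    then have "dim V = 0" by simp
    with dimV show False by simp
  qed
  then obtain w where w: "w \<in> V" "w \<noteq> 0" by blast
  define S where "S = V \<inter> sphere 0 1"
  have "compact S" unfolding S_def
    by (intro closed_Int_compact closed_subspace subV compact_sphere)
  moreover have "S \<noteq> {}"
  proof -
    have "(1 / norm w) *\<^sub>R w \<in> S" using w subV by (simp add: S_def subspace_scale)
    then show ?thesis by blast
  qed
  moreover have "continuous_on S (\<lambda>x. x \<bullet> (A *v x))"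
    by (intro continuous_intros linear_continuous_on matrix_vector_mul_linear)
  ultimately obtain u where u: "u \<in> S" "\<And>y. y \<in> S \<Longrightarrow> y \<bullet> (A *v y) \<le> u \<bullet> (A *v u)"
    using continuous_attains_sup by metis
  define M where "M = u \<bullet> (A *v u)"
  have uV: "u \<in> V" and nu: "norm u = 1" using u(1) by (auto simp: S_def)
  have uu: "u \<bullet> u = 1" using nu by (simp add: norm_eq_1)
  have qle: "x \<bullet> (A *v x) \<le> M * (x \<bullet> x)" if "x \<in> V" for x
  proof (cases "x = 0")
    case True then show ?thesis by simp
  next
    case False
    have "(1 / norm x) *\<^sub>R x \<in> S" using that False subV by (simp add: S_def subspace_scale)
    then have "((1 / norm x) *\<^sub>R x) \<bullet> (A *v ((1 / norm x) *\<^sub>R x)) \<le> M" using u(2) M_def by blast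
    then have "(x \<bullet> (A *v x)) / (norm x)\<^sup>2 \<le> M"
      by (simp add: matrix_vector_mult_scaleR power2_eq_square divide_simps)
    then show ?thesis using False by (simp add: divide_le_eq power2_norm_eq_inner mult.commute)
  qed
  have perp: "w \<bullet> (A *v u) = 0" if "w \<in> V" "w \<bullet> u = 0" for w
  proof (rule quad_zero_lin[where K = "w \<bullet> (A *v w) - M * (w \<bullet> w)"])
    fix t :: real
    have "u + t *\<^sub>R w \<in> V" using uV that(1) subV by (simp add: subspace_add subspace_scale)
    then have "(u + t *\<^sub>R w) \<bullet> (A *v (u + t *\<^sub>R w)) \<le> M * ((u + t *\<^sub>R w) \<bullet> (u + t *\<^sub>R w))" by (rule qle)
    also have "(u + t *\<^sub>R w) \<bullet> (u + t *\<^sub>R w) = 1 + t\<^sup>2 * (w \<bullet> w)"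
      using uu that(2) by (simp add: inner_add_left inner_add_right inner_commute power2_eq_square)
    finally have le: "(u + t *\<^sub>R w) \<bullet> (A *v (u + t *\<^sub>R w)) \<le> M * (1 + t\<^sup>2 * (w \<bullet> w))" .
    have uM: "u \<bullet> (A *v u) = M" by (simp add: M_def)
    show "2 * t * (w \<bullet> (A *v u)) + t\<^sup>2 * (w \<bullet> (A *v w) - M * (w \<bullet> w)) \<le> 0"
      using le unfolding quad_expand[OF sym] uM by (simp add: algebra_simps)
  qed
  define r where "r = A *v u - M *\<^sub>R u"
  have rV: "r \<in> V" unfolding r_def using inv uV subV by (simp add: subspace_diff subspace_scale)
  have ru: "r \<bullet> u = 0" unfolding r_def M_def using uu by (simp add: inner_diff_left inner_commute[of "A *v u" u])
  have "r \<bullet> r = r \<bullet> (A *v u) - M * (r \<bullet> u)" unfolding r_def by (simp add: inner_diff_right)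
  then have "r \<bullet> r = 0" using perp[OF rV ru] ru by simp
  then have eig: "A *v u = M *\<^sub>R u" unfolding r_def by simp
  define V' where "V' = V \<inter> {y. y \<bullet> u = 0}"
  have subV': "subspace V'" unfolding V'_def
    by (intro subspace_inter subV) (auto simp: subspace_def inner_add_left)
  have uV': "u \<notin> V'" using uu by (simp add: V'_def)
  have spanV: "span (insert u V') = V"
  proof
    show "span (insert u V') \<subseteq> V" using subV uV by (intro span_minimal) (auto simp: V'_def)
    show "V \<subseteq> span (insert u V')"
    proof
      fix x assume x: "x \<in> V"
      have "x - (x \<bullet> u) *\<^sub>R u \<in> V'" using x uV subV uu
        by (simp add: V'_def subspace_diff subspace_scale inner_diff_left)
      then have "(x \<bullet> u) *\<^sub>R u + (x - (x \<bullet> u) *\<^sub>R u) \<in> span (insert u V')"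
        by (intro span_add span_scale span_base) auto
      then show "x \<in> span (insert u V')" by simp
    qed
  qed
  have "dim V = dim (insert u V')" using spanV dim_span by metis
  also have "\<dots> = dim V' + 1"
  proof -
    have "u \<notin> span V'" by (metis span_eq_iff subV' uV')
    then show ?thesis by (simp add: dim_insert)
  qed
  finally have dimV': "dim V' = n" using dimV by simp
  have inv': "\<forall>x\<in>V'. A *v x \<in> V'"
  proof
    fix x assume x: "x \<in> V'"
    have "(A *v x) \<bullet> u = x \<bullet> (A *v u)" using sym_quad[OF sym, of u x] by (simp add: inner_commute)
    also have "\<dots> = 0" using x eig by (simp add: V'_def)
    finally show "A *v x \<in> V'" using x inv by (simp add: V'_def)
  qed
  obtain B where B: "B \<subseteq> V'" "finite B" "card B = n" "pairwise orthogonal B"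
      "\<forall>b\<in>B. norm b = 1 \<and> (\<exists>l. A *v b = l *\<^sub>R b)"
    using Suc.IH[OF subV' dimV' inv'] by blast
  show ?case
  proof (intro exI[of _ "insert u B"] conjI)
    show "insert u B \<subseteq> V" using B(1) uV by (auto simp: V'_def)
    show "finite (insert u B)" using B by simp
    have "u \<notin> B" using B(1) uV' by blast
    then show "card (insert u B) = Suc n" using B by simp
    show "pairwise orthogonal (insert u B)"
      using B(1,4) unfolding pairwise_insert
      by (auto simp: V'_def orthogonal_def inner_commute)
    show "\<forall>b\<in>insert u B. norm b = 1 \<and> (\<exists>l. A *v b = l *\<^sub>R b)" using B(5) nu eig by auto
  qed
qed

lemma spectral_matrix:
  fixes A :: "real^'n::finite^'n"
  assumes sym: "transpose A = A"
  obtains Q l where "orthogonal_matrix Q" "transpose Q ** A ** Q = diagm l"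
proof -
  have "dim (UNIV :: (real^'n) set) = CARD('n)" by simp
  then obtain B where B: "finite B" "card B = CARD('n)" "pairwise orthogonal B"
      "\<forall>b\<in>B. norm b = 1 \<and> (\<exists>l. A *v b = l *\<^sub>R b)"
    using spectral_subspace[OF sym, of UNIV "CARD('n)"] by auto
  obtain f where f: "bij_betw f (UNIV::'n set) B"
    using B(1,2) by (metis finite_class.finite_UNIV finite_same_card_bij)
  have fB: "f i \<in> B" for i using f by (auto simp: bij_betw_def)
  have nf: "norm (f i) = 1" for i using fB B(4) by blast
  have of: "i \<noteq> j \<Longrightarrow> orthogonal (f i) (f j)" for i j
    using B(3) f fB by (auto simp: pairwise_def bij_betw_def inj_on_def, metis)
  define l where "l i = (SOME l. A *v f i = l *\<^sub>R f i)" for i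
  have el: "A *v f i = l i *\<^sub>R f i" for i
    unfolding l_def by (rule someI_ex) (use fB B(4) in blast)
  define Q where "Q = (\<chi> i j. f j $ i)"
  have col: "column j Q = f j" for j by (simp add: Q_def column_def vec_eq_iff)
  have oQ: "orthogonal_matrix Q"
    by (simp add: orthogonal_matrix_orthonormal_columns col nf of)
  have "transpose Q ** A ** Q = diagm l"
  proof -
    have "(transpose Q ** A ** Q) $ i $ j = diagm l $ i $ j" for i j
    proof -
      have "(transpose Q ** A ** Q) $ i $ j = l j * (f i \<bullet> f j)"
        by (simp add: congr_entry col el)
      also have "\<dots> = (if i = j then l i else 0)"
        using of[of i j] nf[of i] by (auto simp: orthogonal_def norm_eq_1)
      finally show ?thesis by (simp add: diagm_def)
    qed
    then show ?thesis by (simp add: vec_eq_iff)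
  qed
  with oQ show ?thesis using that by blast
qed


lemma matrix_add_rdistrib': "((B + C) ** A) = (B ** A) + (C ** A)"
  for A B C :: "real^'n::finite^'n"
  by (simp add: matrix_matrix_mult_def vec_eq_iff sum.distrib algebra_simps)

lemma diagm_entry_pos:
  fixes A Q :: "real^'n::finite^'n"
  assumes "orthogonal_matrix Q" "transpose Q ** A ** Q = diagm l"
  shows "l i = column i Q \<bullet> (A *v column i Q)" and "column i Q \<noteq> 0"
proof -
  have "l i = diagm l $ i $ i" by (simp add: diagm_def)
  also have "\<dots> = column i Q \<bullet> (A *v column i Q)" unfolding assms(2)[symmetric] by (rule congr_entry)
  finally show "l i = column i Q \<bullet> (A *v column i Q)" .
  have "norm (column i Q) = 1" using assms(1) by (simp add: orthogonal_matrix_orthonormal_columns)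
  then show "column i Q \<noteq> 0" by auto
qed

lemma det_congr:
  fixes M S :: "real^'n::finite^'n"
  shows "det (transpose S ** M ** S) = det S * det S * det M"
  by (simp add: det_mul)

lemma det_mono_psd:
  fixes A C :: "real^'n::finite^'n"
  assumes sA: "transpose A = A" and sC: "transpose C = C"
    and pA: "\<And>x. x \<noteq> 0 \<Longrightarrow> x \<bullet> (A *v x) > 0" and pC: "\<And>x. x \<bullet> (C *v x) \<ge> 0"
  shows "det A \<le> det (A + C)"
proof -
  obtain Q l where Q: "orthogonal_matrix Q" "transpose Q ** A ** Q = diagm l"
    by (rule spectral_matrix[OF sA])
  have lpos: "l i > 0" for i using diagm_entry_pos[OF Q, of i] pA by simp
  define Dh where "Dh = diagm (\<lambda>i. 1 / sqrt (l i))"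
  define S where "S = Q ** Dh"
  have tS: "transpose S = Dh ** transpose Q"
    by (simp add: S_def Dh_def matrix_transpose_mul)
  have "transpose S ** A ** S = Dh ** (transpose Q ** A ** Q) ** Dh"
    unfolding tS by (simp add: S_def matrix_mul_assoc)
  also have "\<dots> = diagm (\<lambda>i. 1 / sqrt (l i) * l i * (1 / sqrt (l i)))"
    by (simp add: Q(2) Dh_def diagm_mult)
  also have "\<dots> = mat 1"
  proof -
    have "1 / sqrt (l i) * l i * (1 / sqrt (l i)) = 1" for i
      using lpos[of i] by (simp add: field_simps)
    then show ?thesis by (simp add: diagm_def mat_def)
  qed
  finally have SAS: "transpose S ** A ** S = mat 1" .
  define D where "D = transpose S ** C ** S"
  have sD: "transpose D = D" by (simp add: D_def matrix_transpose_mul sC matrix_mul_assoc)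
  have pD: "x \<bullet> (D *v x) \<ge> 0" for x unfolding D_def quad_congr by (rule pC)
  obtain R d where R: "orthogonal_matrix R" "transpose R ** D ** R = diagm d"
    by (rule spectral_matrix[OF sD])
  have dnn: "d i \<ge> 0" for i using diagm_entry_pos[OF R, of i] pD by simp
  have "transpose R ** (mat 1 + D) ** R = transpose R ** R + transpose R ** D ** R"
    by (simp add: matrix_add_ldistrib matrix_add_rdistrib')
  also have "\<dots> = mat 1 + diagm d" using R by (simp add: orthogonal_matrix)
  also have "\<dots> = diagm (\<lambda>i. 1 + d i)" by (simp add: diagm_def mat_def vec_eq_iff)
  finally have "det (transpose R ** (mat 1 + D) ** R) = (\<Prod>i\<in>UNIV. 1 + d i)" by (simp add: det_diagm)
  then have "det (mat 1 + D) = (\<Prod>i\<in>UNIV. 1 + d i)"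
    using orth_det_sq[OF R(1)] by (simp add: det_congr)
  also have "\<dots> \<ge> 1" using dnn by (intro prod_ge_1) auto
  finally have ge1: "det (mat 1 + D) \<ge> 1" .
  have "mat 1 + D = transpose S ** (A + C) ** S"
    by (simp add: D_def SAS[symmetric] matrix_add_ldistrib matrix_add_rdistrib')
  then have "det S * det S * det (A + C) \<ge> 1" using ge1 by (simp add: det_congr)
  moreover have "det S * det S * det A = 1" using SAS det_congr[of S A] by simp
  moreover have "det S * det S > 0"
    using \<open>det S * det S * det A = 1\<close> by (metis mult_eq_0_iff not_real_square_gt_zero zero_neq_one)
  ultimately show ?thesis
    by (metis mult_le_cancel_left_pos)
qed

lemma outer_mult: "outer a b ** outer c d = (b \<bullet> c) *\<^sub>R outer a d" for a b c d :: "real^'n::finite"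
  by (simp add: outer_def matrix_matrix_mult_def vec_eq_iff inner_vec_def sum_distrib_left sum_distrib_right mult_ac)

lemma mat_outer: "M ** outer a b = outer (M *v a) b" for a b :: "real^'n::finite" and M :: "real^'n^'n"
  by (simp add: outer_def matrix_matrix_mult_def matrix_vector_mult_def vec_eq_iff sum_distrib_left sum_distrib_right mult_ac)

lemma outer_mat: "outer a b ** M = outer a (transpose M *v b)" for a b :: "real^'n::finite" and M :: "real^'n^'n"
  by (simp add: outer_def matrix_matrix_mult_def matrix_vector_mult_def transpose_def vec_eq_iff sum_distrib_left sum_distrib_right mult_ac)

lemma matrix_diff_ldistrib: "(A ** (B - C)) = (A ** B) - (A ** C)"
  for A B C :: "real^'n::finite^'n"
  by (simp add: matrix_matrix_mult_def vec_eq_iff sum_subtractf algebra_simps)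

lemma outer_mv: "outer a b *v x = (b \<bullet> x) *\<^sub>R a" for a b x :: "real^'n::finite"
  by (simp add: outer_def matrix_vector_mult_def inner_vec_def vec_eq_iff sum_distrib_left sum_distrib_right mult_ac)

lemma det_cI_outer:
  fixes \<nu> :: "real^'n::finite"
  assumes n1: "norm \<nu> = 1"
  shows "det (c *\<^sub>R mat 1 + d *\<^sub>R outer \<nu> \<nu>) = c ^ (CARD('n) - 1) * (c + d)"
proof -
  define k :: 'n where "k = undefined"
  obtain Q where Q: "orthogonal_matrix Q" "Q *v axis k 1 = \<nu>"
    using orthogonal_matrix_exists_basis[OF n1] by metis
  have tQ: "transpose Q *v \<nu> = axis k 1"
    using Q by (metis matrix_vector_mul_assoc matrix_vector_mul_lid orthogonal_matrix)
  have "transpose Q ** (c *\<^sub>R mat 1 + d *\<^sub>R outer \<nu> \<nu>) ** Q = c *\<^sub>R (transpose Q ** Q) + d *\<^sub>R (transpose Q ** outer \<nu> \<nu> ** Q)"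
    by (simp add: matrix_add_ldistrib matrix_add_rdistrib' matrix_scalar_ac scalar_matrix_assoc[symmetric])
  also have "\<dots> = c *\<^sub>R mat 1 + d *\<^sub>R outer (axis k 1) (axis k 1)"
    using Q(1) tQ by (simp add: orthogonal_matrix mat_outer outer_mat)
  also have "\<dots> = diagm (\<lambda>i. if i = k then c + d else c)"
    by (auto simp: diagm_def mat_def outer_def axis_def vec_eq_iff)
  finally have "det (transpose Q ** (c *\<^sub>R mat 1 + d *\<^sub>R outer \<nu> \<nu>) ** Q) = (\<Prod>i\<in>UNIV. if i = k then c + d else c)"
    by (simp add: det_diagm)
  then have "det (c *\<^sub>R mat 1 + d *\<^sub>R outer \<nu> \<nu>) = (\<Prod>i\<in>UNIV. if i = k then c + d else c)"
    using orth_det_sq[OF Q(1)] by (simp add: det_congr)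
  also have "\<dots> = (c + d) * (\<Prod>i\<in>UNIV - {k}. c)"
    by (subst prod.remove[of UNIV k]) (auto intro!: prod.cong)
  also have "\<dots> = c ^ (CARD('n) - 1) * (c + d)"
    by (simp add: card_Diff_singleton)
  finally show ?thesis .
qed

lemma det_scale_tangent:
  fixes W :: "real^'n::finite^'n" and \<nu> :: "real^'n"
  assumes n1: "norm \<nu> = 1" and WP: "W ** tproj \<nu> = W"
  shows "det (c *\<^sub>R W + outer \<nu> \<nu>) = c ^ (CARD('n) - 1) * det (W + outer \<nu> \<nu>)"
proof -
  have nn: "\<nu> \<bullet> \<nu> = 1" using n1 by (simp add: norm_eq_1)
  have Pnu: "tproj \<nu> *v \<nu> = 0"
    by (simp add: tproj_def matrix_vector_mult_diff_rdistrib outer_mv nn)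
  have Wnu: "W *v \<nu> = 0" by (metis WP Pnu matrix_vector_mul_assoc matrix_vector_mult_0_right)
  have oo: "outer \<nu> \<nu> ** outer \<nu> \<nu> = outer \<nu> \<nu>" by (simp add: outer_mult nn)
  have oP: "outer \<nu> \<nu> ** tproj \<nu> = 0"
    by (simp add: tproj_def matrix_diff_ldistrib oo)
  have e1: "(W + outer \<nu> \<nu>) ** (c *\<^sub>R tproj \<nu> + outer \<nu> \<nu>) =
      W ** (c *\<^sub>R tproj \<nu>) + W ** outer \<nu> \<nu> + (outer \<nu> \<nu> ** (c *\<^sub>R tproj \<nu>) + outer \<nu> \<nu> ** outer \<nu> \<nu>)"
    by (simp only: matrix_add_ldistrib matrix_add_rdistrib' add_ac)
  have e2: "W ** (c *\<^sub>R tproj \<nu>) = c *\<^sub>R W"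
    by (simp add: matrix_scalar_ac scalar_matrix_assoc[symmetric] WP)
  have e3: "outer \<nu> \<nu> ** (c *\<^sub>R tproj \<nu>) = 0"
    by (simp add: matrix_scalar_ac scalar_matrix_assoc[symmetric] oP)
  have e4: "W ** outer \<nu> \<nu> = 0" unfolding mat_outer Wnu by (simp add: outer_def vec_eq_iff)
  have "(W + outer \<nu> \<nu>) ** (c *\<^sub>R tproj \<nu> + outer \<nu> \<nu>) = c *\<^sub>R W + outer \<nu> \<nu>"
    unfolding e1 e2 e3 e4 oo by simp
  moreover have "c *\<^sub>R tproj \<nu> + outer \<nu> \<nu> = c *\<^sub>R mat 1 + (1 - c) *\<^sub>R outer \<nu> \<nu>"
    by (simp add: tproj_def algebra_simps)
  ultimately have "c *\<^sub>R W + outer \<nu> \<nu> = (W + outer \<nu> \<nu>) ** (c *\<^sub>R mat 1 + (1 - c) *\<^sub>R outer \<nu> \<nu>)" by simp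
  then show ?thesis using det_cI_outer[OF n1, of c "1 - c"] by (simp add: det_mul)
qed


lemma continuous_on_vec_nth'[continuous_intros]:
  "continuous_on S f \<Longrightarrow> continuous_on S (\<lambda>x. f x $ i)"
  unfolding continuous_on_def by (auto intro: tendsto_vec_nth)

lemma cont_mm[continuous_intros]:
  fixes A B :: "'a::topological_space \<Rightarrow> real^'n::finite^'n"
  shows "continuous_on S A \<Longrightarrow> continuous_on S B \<Longrightarrow> continuous_on S (\<lambda>x. A x ** B x)"
  unfolding matrix_matrix_mult_def by (intro continuous_intros)

lemma cont_mv[continuous_intros]:
  fixes A :: "'a::topological_space \<Rightarrow> real^'n::finite^'n"
  shows "continuous_on S A \<Longrightarrow> continuous_on S B \<Longrightarrow> continuous_on S (\<lambda>x. A x *v B x)"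
  unfolding matrix_vector_mult_def by (intro continuous_intros)

lemma cont_det[continuous_intros]:
  fixes A :: "'a::topological_space \<Rightarrow> real^'n::finite^'n"
  shows "continuous_on S A \<Longrightarrow> continuous_on S (\<lambda>x. det (A x))"
  unfolding det_def by (intro continuous_intros)

lemma cont_outer[continuous_intros]:
  fixes a b :: "'a::topological_space \<Rightarrow> real^'n::finite"
  shows "continuous_on S a \<Longrightarrow> continuous_on S b \<Longrightarrow> continuous_on S (\<lambda>x. outer (a x) (b x))"
  unfolding outer_def by (intro continuous_intros)

lemma cont_tproj[continuous_intros]:
  fixes a :: "'a::topological_space \<Rightarrow> real^'n::finite"
  shows "continuous_on S a \<Longrightarrow> continuous_on S (\<lambda>x. tproj (a x))"
  unfolding tproj_def by (intro continuous_intros)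

lemma cont_egrad:
  assumes "cinf_on U G" shows "continuous_on U (egrad G)"
proof -
  have "continuous_on U (partial_deriv i G)" for i using cinf_C1[OF assms] by (simp add: C1on_def)
  then show ?thesis unfolding egrad_def by (intro continuous_intros) auto
qed

lemma cont_ehess:
  assumes "cinf_on U G" shows "continuous_on U (ehess G)"
proof -
  have "continuous_on U (partial_deriv i (partial_deriv j G))" for i j
    using cinf_C1[OF cinf_pd[OF assms]] by (simp add: C1on_def)
  then show ?thesis unfolding ehess_def by (intro continuous_intros) auto
qed

lemma cont_cov_det:
  assumes "cinf_on U G" shows "continuous_on U (cov_det \<theta> k G)"
proof -
  have "continuous_on U G" using cinf_C1[OF assms] by (simp add: C1on_def)
  then show ?thesis
    unfolding cov_det_def[abs_def] cov_W_def cov_hess_def cap_normal_def Let_def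
    using cont_egrad[OF assms] cont_ehess[OF assms] by (intro continuous_intros) auto
qed

lemma cont_cov_grad:
  assumes "cinf_on U G" shows "continuous_on U (cov_grad \<theta> k G)"
  unfolding cov_grad_def[abs_def] cap_normal_def
  using cont_egrad[OF assms] by (intro continuous_intros) auto


lemma scaleR_mv: "(c *\<^sub>R M) *v x = c *\<^sub>R (M *v x)" for M :: "real^'n::finite^'n"
  by (simp add: matrix_vector_mult_def vec_eq_iff sum_distrib_left mult_ac)

lemma curve_max:
  fixes h1 h2 :: "real^'m::finite \<Rightarrow> real" and a u v :: "real^'m"
  assumes c1: "cinf_on U1 h1" and c2: "cinf_on U2 h2" and x1: "a + u \<in> U1" and x2: "a + u \<in> U2"
    and d0: "d0 > 0" and le: "\<And>t. 0 < t \<Longrightarrow> t < d0 \<Longrightarrow> h1 (a + cos t *\<^sub>R u + sin t *\<^sub>R v) - c * h2 (a + cos t *\<^sub>R u + sin t *\<^sub>R v) \<le> 0"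
    and z: "h1 (a + u) - c * h2 (a + u) = 0"
  shows "(egrad h1 (a + u) - c *\<^sub>R egrad h2 (a + u)) \<bullet> v \<le> 0"
    and "(egrad h1 (a + u) - c *\<^sub>R egrad h2 (a + u)) \<bullet> v = 0 \<Longrightarrow>
         v \<bullet> ((ehess h1 (a + u) - c *\<^sub>R ehess h2 (a + u)) *v v) - (egrad h1 (a + u) - c *\<^sub>R egrad h2 (a + u)) \<bullet> u \<le> 0"
proof -
  define \<gamma> where "\<gamma> t = a + cos t *\<^sub>R u + sin t *\<^sub>R v" for t
  define E1 where "E1 t = egrad h1 (\<gamma> t) \<bullet> (- sin t *\<^sub>R u + cos t *\<^sub>R v)" for t
  define E2 where "E2 t = egrad h2 (\<gamma> t) \<bullet> (- sin t *\<^sub>R u + cos t *\<^sub>R v)" for t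
  obtain d1 where d1: "d1 > 0" "\<And>t. \<bar>t\<bar> < d1 \<Longrightarrow> ((\<lambda>s. h1 (\<gamma> s)) has_real_derivative E1 t) (at t)"
    using curve_second(1)[OF c1 x1, of v] unfolding \<gamma>_def[abs_def] E1_def \<gamma>_def by blast
  obtain d2 where d2: "d2 > 0" "\<And>t. \<bar>t\<bar> < d2 \<Longrightarrow> ((\<lambda>s. h2 (\<gamma> s)) has_real_derivative E2 t) (at t)"
    using curve_second(1)[OF c2 x2, of v] unfolding \<gamma>_def[abs_def] E2_def \<gamma>_def by blast
  have L1: "(E1 has_real_derivative (v \<bullet> (ehess h1 (a + u) *v v) - egrad h1 (a + u) \<bullet> u)) (at 0)"
    using curve_second(2)[OF c1 x1, of v] unfolding E1_def[abs_def] \<gamma>_def by simp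
  have L2: "(E2 has_real_derivative (v \<bullet> (ehess h2 (a + u) *v v) - egrad h2 (a + u) \<bullet> u)) (at 0)"
    using curve_second(2)[OF c2 x2, of v] unfolding E2_def[abs_def] \<gamma>_def by simp
  define d where "d = min d0 (min d1 d2)"
  have d: "d > 0" using d0 d1 d2 by (simp add: d_def)
  define \<phi> where "\<phi> t = h1 (\<gamma> t) - c * h2 (\<gamma> t)" for t
  define \<phi>' where "\<phi>' t = E1 t - c * E2 t" for t
  have D\<phi>: "(\<phi> has_real_derivative \<phi>' t) (at t)" if "\<bar>t\<bar> < d" for t
    unfolding \<phi>_def[abs_def] \<phi>'_def
    using that by (intro DERIV_diff DERIV_cmult d1(2) d2(2)) (auto simp: d_def)
  have g0: "\<gamma> 0 = a + u" by (simp add: \<gamma>_def)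
  have p0: "\<phi> 0 = 0" using z by (simp add: \<phi>_def g0)
  have lee: "\<phi> t \<le> 0" if "0 < t" "t < d" for t using le[of t] that by (simp add: \<phi>_def \<gamma>_def d_def)
  have ph0: "\<phi>' 0 = (egrad h1 (a + u) - c *\<^sub>R egrad h2 (a + u)) \<bullet> v"
    by (simp add: \<phi>'_def E1_def E2_def g0 inner_diff_left)
  show "(egrad h1 (a + u) - c *\<^sub>R egrad h2 (a + u)) \<bullet> v \<le> 0"
    using first_order_right[OF D\<phi>[of 0] p0 d lee] d ph0 by simp
  assume zz: "(egrad h1 (a + u) - c *\<^sub>R egrad h2 (a + u)) \<bullet> v = 0"
  have L: "(\<phi>' has_real_derivative
      (v \<bullet> (ehess h1 (a + u) *v v) - egrad h1 (a + u) \<bullet> u) - c * (v \<bullet> (ehess h2 (a + u) *v v) - egrad h2 (a + u) \<bullet> u)) (at 0)"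
    unfolding \<phi>'_def[abs_def] by (intro DERIV_diff DERIV_cmult L1 L2)
  have "(v \<bullet> (ehess h1 (a + u) *v v) - egrad h1 (a + u) \<bullet> u) - c * (v \<bullet> (ehess h2 (a + u) *v v) - egrad h2 (a + u) \<bullet> u) \<le> 0"
    by (rule second_order_right[OF D\<phi> ph0[unfolded zz] L p0 d lee])
  then show "v \<bullet> ((ehess h1 (a + u) - c *\<^sub>R ehess h2 (a + u)) *v v) - (egrad h1 (a + u) - c *\<^sub>R egrad h2 (a + u)) \<bullet> u \<le> 0"
    by (simp add: algebra_simps matrix_vector_mult_diff_rdistrib inner_diff_left inner_diff_right scaleR_mv)
qed


lemma outer_mv': "outer a b *v x = (b \<bullet> x) *\<^sub>R a" for a b x :: "real^'n::finite"
  by (simp add: outer_def matrix_vector_mult_def inner_vec_def vec_eq_iff sum_distrib_left sum_distrib_right mult_ac)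

lemma tproj_mv: "tproj \<nu> *v x = x - (\<nu> \<bullet> x) *\<^sub>R \<nu>" for \<nu> x :: "real^'n::finite"
  by (simp add: tproj_def matrix_vector_mult_diff_rdistrib outer_mv')

lemma tproj_sym: "transpose (tproj \<nu>) = tproj \<nu>" for \<nu> :: "real^'n::finite"
  by (simp add: tproj_def transpose_def outer_def mat_def vec_eq_iff mult.commute eq_commute)

lemma inner_tproj: "x \<bullet> (tproj \<nu> *v y) = (tproj \<nu> *v x) \<bullet> y" for \<nu> x y :: "real^'n::finite"
  by (simp add: tproj_mv inner_diff_left inner_diff_right inner_commute)

lemma tproj_perp: "norm \<nu> = 1 \<Longrightarrow> (tproj \<nu> *v x) \<bullet> \<nu> = 0" for \<nu> x :: "real^'n::finite"
proof -
  assume "norm \<nu> = 1"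
  then have "\<nu> \<bullet> \<nu> = 1" by (simp add: norm_eq_1)
  then show ?thesis by (simp add: tproj_mv inner_diff_left inner_commute[of x \<nu>])
qed

lemma tproj_fix: "x \<bullet> \<nu> = 0 \<Longrightarrow> tproj \<nu> *v x = x" for \<nu> x :: "real^'n::finite"
  by (simp add: tproj_mv inner_commute)

lemma tproj_idem_v: "norm \<nu> = 1 \<Longrightarrow> tproj \<nu> *v (tproj \<nu> *v x) = tproj \<nu> *v x" for \<nu> x :: "real^'n::finite"
  by (rule tproj_fix[OF tproj_perp])

lemma tproj_idem: "norm \<nu> = 1 \<Longrightarrow> tproj \<nu> ** tproj \<nu> = tproj \<nu>" for \<nu> :: "real^'n::finite"
  by (metis matrix_eq matrix_vector_mul_assoc tproj_idem_v)

lemma covW_P: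
  assumes "norm (cap_normal \<theta> k \<zeta>) = 1"
  shows "cov_W \<theta> k G \<zeta> ** tproj (cap_normal \<theta> k \<zeta>) = cov_W \<theta> k G \<zeta>"
  using tproj_idem[OF assms]
  by (simp add: cov_W_def cov_hess_def Let_def matrix_add_rdistrib' scalar_matrix_assoc[symmetric]
      matrix_mul_assoc[symmetric])

lemma covW_sym:
  assumes "transpose (ehess G \<zeta>) = ehess G \<zeta>"
  shows "transpose (cov_W \<theta> k G \<zeta>) = cov_W \<theta> k G \<zeta>"
proof -
  have t1: "transpose (A + B) = transpose A + transpose B" for A B :: "real^'n^'n"
    by (simp add: transpose_def vec_eq_iff)
  have t2: "transpose (A - B) = transpose A - transpose B" for A B :: "real^'n^'n"
    by (simp add: transpose_def vec_eq_iff)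
  show ?thesis
    by (simp add: cov_W_def cov_hess_def Let_def t1 t2 matrix_transpose_mul transpose_scalar assms tproj_sym
        matrix_mul_assoc)
qed

lemma quadW:
  assumes n1: "norm (cap_normal \<theta> k \<zeta>) = 1"
  defines "P \<equiv> tproj (cap_normal \<theta> k \<zeta>)"
  shows "x \<bullet> (cov_W \<theta> k G \<zeta> *v x) = (P *v x) \<bullet> (ehess G \<zeta> *v (P *v x))
     - (egrad G \<zeta> \<bullet> cap_normal \<theta> k \<zeta>) * ((P *v x) \<bullet> (P *v x)) + G \<zeta> * ((P *v x) \<bullet> (P *v x))"
proof -
  define y where "y = P *v x"
  define s where "s = egrad G \<zeta> \<bullet> cap_normal \<theta> k \<zeta>"
  have "cov_W \<theta> k G \<zeta> *v x = P *v (ehess G \<zeta> *v y - s *\<^sub>R y) + G \<zeta> *\<^sub>R y"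
    by (simp add: cov_W_def cov_hess_def Let_def P_def[symmetric] y_def s_def matrix_vector_mult_add_rdistrib
        matrix_vector_mul_assoc[symmetric] matrix_vector_mult_diff_rdistrib scaleR_mv)
  moreover have "x \<bullet> (P *v z) = y \<bullet> z" for z unfolding y_def P_def by (rule inner_tproj)
  moreover have "x \<bullet> y = y \<bullet> y"
    using inner_tproj[of x "cap_normal \<theta> k \<zeta>" y] tproj_idem_v[OF n1, of x] by (simp add: y_def P_def)
  ultimately show ?thesis
    by (simp add: inner_add_right inner_diff_right y_def[symmetric] s_def)
qed

lemma sphere_curve:
  fixes \<nu> v :: "real^'n::finite"
  assumes "norm \<nu> = 1" "norm v = 1" "v \<bullet> \<nu> = 0"
  shows "norm (cos t *\<^sub>R \<nu> + sin t *\<^sub>R v) = 1"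
proof -
  have "(cos t *\<^sub>R \<nu> + sin t *\<^sub>R v) \<bullet> (cos t *\<^sub>R \<nu> + sin t *\<^sub>R v) = (cos t)\<^sup>2 + (sin t)\<^sup>2"
    using assms by (simp add: inner_add_left inner_add_right norm_eq_1 inner_commute power2_eq_square)
  then show ?thesis by (simp add: norm_eq_1)
qed

lemma cap_curve_in:
  fixes k :: "'m::finite" and \<nu> v :: "real^'m"
  assumes z: "cap_center \<theta> k + \<nu> \<in> cap \<theta> k" and v1: "norm v = 1" and vp: "v \<bullet> \<nu> = 0"
    and adm: "(cap_center \<theta> k + \<nu>) $ k > 0 \<or> v $ k > 0"
  shows "\<exists>d>0. \<forall>t. 0 < t \<and> t < d \<longrightarrow> cap_center \<theta> k + cos t *\<^sub>R \<nu> + sin t *\<^sub>R v \<in> cap_interior \<theta> k"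
proof -
  have n1: "norm \<nu> = 1" using z by (simp add: cap_def)
  define fk where "fk t = (cap_center \<theta> k + cos t *\<^sub>R \<nu> + sin t *\<^sub>R v) $ k" for t
  have f0: "fk 0 \<ge> 0" using z by (simp add: fk_def cap_def)
  have D: "(fk has_real_derivative v $ k) (at 0)"
    unfolding fk_def by (auto intro!: derivative_eq_intros)
  have "\<exists>d>0. \<forall>t. 0 < t \<and> t < d \<longrightarrow> fk t > 0"
  proof (cases "fk 0 > 0")
    case True
    have "isCont fk 0" using D by (rule DERIV_isCont)
    then have "fk \<midarrow>0\<rightarrow> fk 0" by (simp add: isCont_def)
    from LIM_fun_gt_zero[OF this True] obtain r where "r > 0" "\<And>x. x \<noteq> 0 \<and> \<bar>0 - x\<bar> < r \<Longrightarrow> 0 < fk x"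
      by blast
    then show ?thesis by (intro exI[of _ r]) auto
  next
    case False
    then have "v $ k > 0" using adm by (simp add: fk_def)
    from DERIV_pos_inc_right[OF D this] obtain d where "d > 0" "\<And>h. 0 < h \<Longrightarrow> h < d \<Longrightarrow> fk 0 < fk (0 + h)"
      by blast
    then show ?thesis using f0 by (intro exI[of _ d]) force
  qed
  then obtain d where d: "d > 0" "\<And>t. 0 < t \<Longrightarrow> t < d \<Longrightarrow> fk t > 0" by blast
  show ?thesis
  proof (intro exI[of _ d] conjI allI impI d(1))
    fix t assume t: "0 < t \<and> t < d"
    have "norm (cap_center \<theta> k + cos t *\<^sub>R \<nu> + sin t *\<^sub>R v - cap_center \<theta> k) = 1"
      using sphere_curve[OF n1 v1 vp] by (simp add: add.assoc)
    then show "cap_center \<theta> k + cos t *\<^sub>R \<nu> + sin t *\<^sub>R v \<in> cap_interior \<theta> k"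
      using d(2)[of t] t by (simp add: cap_interior_def cap_def fk_def less_imp_le)
  qed
qed


lemma tends_along:
  fixes F :: "real^'m::finite \<Rightarrow> 'b::topological_space"
  assumes "open U" "continuous_on U F" "\<gamma> 0 \<in> U" "continuous (at 0) \<gamma>"
  shows "((\<lambda>t. F (\<gamma> t)) \<longlongrightarrow> F (\<gamma> 0)) (at_right 0)"
proof -
  have "isCont F (\<gamma> 0)" using assms continuous_on_eq_continuous_at by blast
  then have "isCont (F \<circ> \<gamma>) 0" using assms(4) continuous_at_compose by blast
  then have "((\<lambda>t. F (\<gamma> t)) \<longlongrightarrow> F (\<gamma> 0)) (at 0)" by (simp add: isCont_def o_def)
  then show ?thesis by (rule tendsto_mono[OF at_within_le_at])
qed

lemma cap_alt: "cap \<theta> k = {\<zeta>. 0 \<le> \<zeta> $ k} \<inter> sphere (cap_center \<theta> k) 1"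
  by (auto simp: cap_def dist_norm norm_minus_commute)

lemma compact_cap: "compact (cap \<theta> k)"
proof -
  have "closed {\<zeta>::real^'a. 0 \<le> \<zeta> $ k}"
    by (intro closed_Collect_le continuous_intros)
  then show ?thesis unfolding cap_alt by (intro closed_Int_compact compact_sphere)
qed


lemma transpose_add': "transpose (A + B) = transpose A + transpose B" for A B :: "real^'n::finite^'n"
  by (simp add: transpose_def vec_eq_iff)

lemma transpose_diff': "transpose (A - B) = transpose A - transpose B" for A B :: "real^'n::finite^'n"
  by (simp add: transpose_def vec_eq_iff)

lemma transpose_outer: "transpose (outer a a) = outer a a" for a :: "real^'n::finite"
  by (simp add: transpose_def outer_def vec_eq_iff mult.commute)

lemma key_le:
  fixes k :: "'m::finite" and \<theta> p q :: real and f h1 h2 :: "real^'m \<Rightarrow> real"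
  assumes th0: "0 < \<theta>" and th1: "\<theta> < pi / 2" and pq: "p > q"
    and sf: "smooth_upto (cap \<theta> k) f" and fpos: "\<forall>\<zeta>\<in>cap \<theta> k. f \<zeta> > 0"
    and s1: "is_cap_solution \<theta> k p q f h1" and s2: "is_cap_solution \<theta> k p q f h2"
  shows "\<forall>\<zeta>\<in>cap \<theta> k. h1 \<zeta> \<le> h2 \<zeta>"
proof (cases "cap \<theta> k = {}")
  case True then show ?thesis by simp
next
  case False
  obtain U1 where U1: "cap \<theta> k \<subseteq> U1" "cinf_on U1 h1"
    using s1 by (auto simp: is_cap_solution_def smooth_upto_def)
  obtain U2 where U2: "cap \<theta> k \<subseteq> U2" "cinf_on U2 h2"
    using s2 by (auto simp: is_cap_solution_def smooth_upto_def)
  obtain Uf where Uf: "cap \<theta> k \<subseteq> Uf" "cinf_on Uf f"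
    using sf by (auto simp: smooth_upto_def)
  have h1pos: "\<And>\<zeta>. \<zeta> \<in> cap \<theta> k \<Longrightarrow> h1 \<zeta> > 0" using s1 by (simp add: is_cap_solution_def)
  have h2pos: "\<And>\<zeta>. \<zeta> \<in> cap \<theta> k \<Longrightarrow> h2 \<zeta> > 0" using s2 by (simp add: is_cap_solution_def)
  have cv1: "strictly_convex_cap \<theta> k h1" using s1 by (simp add: is_cap_solution_def)
  define N where "N = real CARD('m)"
  define RHS where "RHS h \<zeta> = f \<zeta> * h \<zeta> powr (p - 1) * ((h \<zeta>)\<^sup>2 + (norm (cov_grad \<theta> k h \<zeta>))\<^sup>2) powr ((N - q) / 2)"
    for h :: "real^'m \<Rightarrow> real" and \<zeta>
  have eq1: "\<And>\<zeta>. \<zeta> \<in> cap_interior \<theta> k \<Longrightarrow> cov_det \<theta> k h1 \<zeta> = RHS h1 \<zeta>"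
    using s1 by (simp add: is_cap_solution_def RHS_def N_def)
  have eq2: "\<And>\<zeta>. \<zeta> \<in> cap_interior \<theta> k \<Longrightarrow> cov_det \<theta> k h2 \<zeta> = RHS h2 \<zeta>"
    using s2 by (simp add: is_cap_solution_def RHS_def N_def)
  have rob1: "\<And>\<zeta>. \<zeta> \<in> cap_bdry \<theta> k \<Longrightarrow> cov_grad \<theta> k h1 \<zeta> \<bullet> cap_conormal \<theta> k \<zeta> = cot \<theta> * h1 \<zeta>"
    using s1 by (simp add: is_cap_solution_def)
  have rob2: "\<And>\<zeta>. \<zeta> \<in> cap_bdry \<theta> k \<Longrightarrow> cov_grad \<theta> k h2 \<zeta> \<bullet> cap_conormal \<theta> k \<zeta> = cot \<theta> * h2 \<zeta>"
    using s2 by (simp add: is_cap_solution_def)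
  have ch1: "continuous_on U1 h1" using cinf_C1[OF U1(2)] by (simp add: C1on_def)
  have ch2: "continuous_on U2 h2" using cinf_C1[OF U2(2)] by (simp add: C1on_def)
  have chf: "continuous_on Uf f" using cinf_C1[OF Uf(2)] by (simp add: C1on_def)
  have oU1: "open U1" and oU2: "open U2" and oUf: "open Uf"
    using U1 U2 Uf by (auto simp: cinf_on_def)
  have "continuous_on (cap \<theta> k) (\<lambda>\<zeta>. h1 \<zeta> / h2 \<zeta>)"
    using continuous_on_subset[OF ch1 U1(1)] continuous_on_subset[OF ch2 U2(1)] h2pos
    by (intro continuous_on_divide) (auto, metis less_irrefl)
  then obtain \<zeta>0 where z0: "\<zeta>0 \<in> cap \<theta> k" and zmax: "\<And>\<zeta>. \<zeta> \<in> cap \<theta> k \<Longrightarrow> h1 \<zeta> / h2 \<zeta> \<le> h1 \<zeta>0 / h2 \<zeta>0"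
    using continuous_attains_sup[OF compact_cap False] by blast
  define c where "c = h1 \<zeta>0 / h2 \<zeta>0"
  have cpos: "c > 0" using h1pos[OF z0] h2pos[OF z0] by (simp add: c_def)
  have hc: "h1 \<zeta>0 = c * h2 \<zeta>0" using h2pos[OF z0] by (simp add: c_def)
  have cle: "c \<le> 1"
  proof -
    define C where "C = cap_center \<theta> k"
    define \<nu> where "\<nu> = \<zeta>0 - C"
    have nud: "cap_normal \<theta> k \<zeta>0 = \<nu>" by (simp add: cap_normal_def \<nu>_def C_def)
    have n1: "norm \<nu> = 1" using z0 by (simp add: cap_def \<nu>_def C_def)
    have nn: "\<nu> \<bullet> \<nu> = 1" using n1 by (simp add: norm_eq_1)
    have zC: "C + \<nu> = \<zeta>0" by (simp add: \<nu>_def)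
    have Ck: "C $ k = - cos \<theta>" by (simp add: C_def cap_center_def cap_e_def)
    have nuk: "\<nu> $ k = \<zeta>0 $ k + cos \<theta>" using Ck by (simp add: \<nu>_def)
    define P where "P = tproj \<nu>"
    define g where "g = egrad h1 \<zeta>0 - c *\<^sub>R egrad h2 \<zeta>0"
    define H where "H = ehess h1 \<zeta>0 - c *\<^sub>R ehess h2 \<zeta>0"
    define Qf where "Qf v = v \<bullet> (H *v v) - (g \<bullet> \<nu>) * (v \<bullet> v)" for v
    have le_cap: "h1 \<zeta> - c * h2 \<zeta> \<le> 0" if "\<zeta> \<in> cap \<theta> k" for \<zeta>
      using zmax[OF that] h2pos[OF that] by (simp add: c_def[symmetric] divide_le_eq)
    have z00: "h1 (C + \<nu>) - c * h2 (C + \<nu>) = 0" using hc zC by simp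
    have zU: "\<zeta>0 \<in> U1" "\<zeta>0 \<in> U2" "\<zeta>0 \<in> Uf" using z0 U1 U2 Uf by auto
    have x1: "C + \<nu> \<in> U1" and x2: "C + \<nu> \<in> U2" using zU zC by auto
    have cond: "g \<bullet> v \<le> 0 \<and> (g \<bullet> v = 0 \<longrightarrow> v \<bullet> (H *v v) - g \<bullet> \<nu> \<le> 0)"
      if v: "v \<bullet> \<nu> = 0" "norm v = 1" "\<zeta>0 $ k > 0 \<or> v $ k > 0" for v
    proof -
      obtain d where d: "d > 0" "\<And>t. 0 < t \<Longrightarrow> t < d \<Longrightarrow> C + cos t *\<^sub>R \<nu> + sin t *\<^sub>R v \<in> cap_interior \<theta> k"
        using cap_curve_in[of \<theta> k \<nu> v] z0 v zC unfolding C_def by auto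
      have le: "h1 (C + cos t *\<^sub>R \<nu> + sin t *\<^sub>R v) - c * h2 (C + cos t *\<^sub>R \<nu> + sin t *\<^sub>R v) \<le> 0"
        if "0 < t" "t < d" for t
        using d(2)[OF that] le_cap by (auto simp: cap_interior_def)
      note cm = curve_max[OF U1(2) U2(2) x1 x2 d(1) le z00]
      show ?thesis using cm unfolding g_def H_def zC by auto
    qed
    have cond': "g \<bullet> v \<le> 0 \<and> (g \<bullet> v = 0 \<longrightarrow> Qf v \<le> 0)"
      if v: "v \<bullet> \<nu> = 0" "v \<noteq> 0" "\<zeta>0 $ k > 0 \<or> v $ k > 0" for v
    proof -
      define w where "w = (1 / norm v) *\<^sub>R v"
      have nv: "norm v > 0" using v by simp
      have w: "w \<bullet> \<nu> = 0" "norm w = 1" "\<zeta>0 $ k > 0 \<or> w $ k > 0"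
        using v nv by (auto simp: w_def)
      have gw: "g \<bullet> w = (g \<bullet> v) / norm v" by (simp add: w_def)
      have Hw: "w \<bullet> (H *v w) = (v \<bullet> (H *v v)) / (norm v)\<^sup>2"
        by (simp add: w_def matrix_vector_mult_scaleR power2_eq_square)
      have vv: "v \<bullet> v = (norm v)\<^sup>2" by (simp add: power2_norm_eq_inner)
      have Q: "Qf v = (norm v)\<^sup>2 * (w \<bullet> (H *v w) - g \<bullet> \<nu>)"
        unfolding Qf_def Hw vv using nv by (simp add: field_simps)
      from cond[OF w] have "g \<bullet> w \<le> 0" "g \<bullet> w = 0 \<Longrightarrow> w \<bullet> (H *v w) - g \<bullet> \<nu> \<le> 0" by auto
      then show ?thesis using nv unfolding gw Q
        by (auto simp: divide_le_0_iff mult_nonneg_nonpos)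
    qed
    have Qsym: "Qf (- v) = Qf v" for v
    proof -
      have "H *v (- v) = - (H *v v)" by (metis matrix_vector_mult_scaleR scaleR_minus1_left)
      then show ?thesis by (simp add: Qf_def)
    qed
    have k0: "\<zeta>0 $ k \<ge> 0" using z0 by (simp add: cap_def)
    have gQ: "(\<forall>v. v \<bullet> \<nu> = 0 \<longrightarrow> g \<bullet> v = 0) \<and> (\<forall>v. v \<bullet> \<nu> = 0 \<longrightarrow> Qf v \<le> 0)"
    proof (cases "\<zeta>0 $ k > 0")
      case True
      have gp: "g \<bullet> v = 0" if "v \<bullet> \<nu> = 0" for v
      proof (cases "v = 0")
        case False
        have "g \<bullet> v \<le> 0" using cond'[OF that False] True by simp
        moreover have "g \<bullet> (- v) \<le> 0" using cond'[of "- v"] that False True by simp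
        ultimately show ?thesis by simp
      qed simp
      moreover have "Qf v \<le> 0" if "v \<bullet> \<nu> = 0" for v
      proof (cases "v = 0")
        case False
        then show ?thesis using cond'[OF that False] True gp[OF that] by simp
      qed (simp add: Qf_def)
      ultimately show ?thesis by blast
    next
      case False
      then have zk: "\<zeta>0 $ k = 0" using k0 by simp
      then have zb: "\<zeta>0 \<in> cap_bdry \<theta> k" using z0 by (simp add: cap_bdry_def)
      have nuk': "\<nu> $ k = cos \<theta>" using nuk zk by simp
      define w0 where "w0 = P *v axis k 1"
      have w0e: "w0 = axis k 1 - cos \<theta> *\<^sub>R \<nu>"
        by (simp add: w0_def P_def tproj_mv inner_axis nuk')
      have w0n: "w0 \<bullet> \<nu> = 0" unfolding w0_def P_def by (rule tproj_perp[OF n1])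
      have sth: "sin \<theta> > 0" using th0 th1 by (intro sin_gt_zero) auto
      have w0k: "w0 $ k = (sin \<theta>)\<^sup>2"
        using sin_cos_squared_add2[of \<theta>] by (simp add: w0e nuk' power2_eq_square algebra_simps)
      have w0kp: "w0 $ k > 0" using w0k sth by simp
      have w0nz: "w0 \<noteq> 0" using w0kp by auto
      have conorm: "cap_conormal \<theta> k \<zeta>0 = - (1 / norm w0) *\<^sub>R w0"
        by (simp add: cap_conormal_def nud Let_def w0_def P_def)
      have rob: "egrad h \<zeta>0 \<bullet> w0 = - (norm w0 * cot \<theta> * h \<zeta>0)"
        if "cov_grad \<theta> k h \<zeta>0 \<bullet> cap_conormal \<theta> k \<zeta>0 = cot \<theta> * h \<zeta>0" for h
      proof -
        have "cov_grad \<theta> k h \<zeta>0 \<bullet> w0 = egrad h \<zeta>0 \<bullet> w0"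
          unfolding cov_grad_def nud
          using inner_tproj[of "egrad h \<zeta>0" \<nu> w0] tproj_fix[OF w0n] by (simp add: P_def)
        then show ?thesis using that w0nz unfolding conorm by (simp add: field_simps)
      qed
      have gw0: "g \<bullet> w0 = 0"
        using rob[OF rob1[OF zb]] rob[OF rob2[OF zb]] hc
        by (simp add: g_def inner_diff_left algebra_simps)
      have gp: "g \<bullet> v = 0" if v: "v \<bullet> \<nu> = 0" for v
      proof -
        define v' where "v' = v - (v $ k / w0 $ k) *\<^sub>R w0"
        have v'n: "v' \<bullet> \<nu> = 0" using v w0n by (simp add: v'_def inner_diff_left)
        have v'k: "v' $ k = 0" using w0kp by (simp add: v'_def)
        have k1: "(v' + w0) $ k > 0" "(w0 - v') $ k > 0" using v'k w0kp by auto
        then have nz: "v' + w0 \<noteq> 0" "w0 - v' \<noteq> 0" by (metis less_irrefl zero_index)+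
        have "g \<bullet> (v' + w0) \<le> 0"
          using cond'[of "v' + w0"] v'n w0n k1 nz by (auto simp: inner_add_left)
        moreover have "g \<bullet> (w0 - v') \<le> 0"
          using cond'[of "w0 - v'"] v'n w0n k1 nz by (auto simp: inner_diff_left)
        ultimately have "g \<bullet> v' = 0" using gw0 by (simp add: inner_add_right inner_diff_right)
        then show ?thesis using gw0 by (simp add: v'_def inner_diff_right)
      qed
      have Qn: "Qf v \<le> 0" if v: "v \<bullet> \<nu> = 0" for v
      proof -
        have A: "Qf u \<le> 0" if "u \<bullet> \<nu> = 0" "u $ k > 0" for u
        proof -
          have "u \<noteq> 0" using that(2) by auto
          then show ?thesis using cond'[of u] that gp[OF that(1)] by auto
        qed
        consider "v $ k > 0" | "v $ k < 0" | "v $ k = 0" by linarith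
        then show ?thesis
        proof cases
          case 1 then show ?thesis using A v by blast
        next
          case 2 then show ?thesis using A[of "- v"] v Qsym[of v] by simp
        next
          case 3
          define B where "B = v \<bullet> (H *v w0) + w0 \<bullet> (H *v v) - 2 * (g \<bullet> \<nu>) * (v \<bullet> w0)"
          have ex: "Qf (v + e *\<^sub>R w0) = Qf v + e * B + e\<^sup>2 * Qf w0" for e
            by (simp add: Qf_def B_def matrix_vector_right_distrib matrix_vector_mult_scaleR
                inner_add_left inner_add_right inner_commute power2_eq_square algebra_simps)
          have ev: "\<forall>\<^sub>F e in at_right 0. Qf v + e * B + e\<^sup>2 * Qf w0 \<le> 0"
          proof -
            have pos: "\<forall>\<^sub>F e in at_right (0::real). e > 0" by (simp add: eventually_at_right_less)
            have qn: "Qf (v + e *\<^sub>R w0) \<le> 0" if "e > 0" for e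
              using A[of "v + e *\<^sub>R w0"] v w0n 3 w0kp that
              by (simp add: inner_add_left)
            show ?thesis using pos
            proof (rule eventually_mono)
              fix e :: real assume "e > 0"
              then show "Qf v + e * B + e\<^sup>2 * Qf w0 \<le> 0" using qn ex by metis
            qed
          qed
          have "((\<lambda>e. Qf v + e * B + e\<^sup>2 * Qf w0) \<longlongrightarrow> Qf v + 0 * B + 0\<^sup>2 * Qf w0) (at_right 0)"
            by (intro tendsto_intros)
          then have "((\<lambda>e. Qf v + e * B + e\<^sup>2 * Qf w0) \<longlongrightarrow> Qf v) (at_right 0)" by simp
          from tendsto_upperbound[OF this ev] show ?thesis by simp
        qed
      qed
      show ?thesis using gp Qn by blast
    qed
    have gperp: "\<And>v. v \<bullet> \<nu> = 0 \<Longrightarrow> g \<bullet> v = 0" and Qneg: "\<And>v. v \<bullet> \<nu> = 0 \<Longrightarrow> Qf v \<le> 0"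
      using gQ by auto
    have Pg: "P *v g = 0"
    proof -
      have "(P *v g) \<bullet> \<nu> = 0" using tproj_perp[OF n1] by (simp add: P_def)
      then have "g \<bullet> (P *v g) = 0" using gperp by blast
      moreover have "g \<bullet> (P *v g) = (P *v g) \<bullet> (P *v g)"
        using inner_tproj[of g \<nu> "P *v g"] tproj_idem_v[OF n1, of g] by (simp add: P_def)
      ultimately show ?thesis by simp
    qed
    have cg: "cov_grad \<theta> k h1 \<zeta>0 = c *\<^sub>R cov_grad \<theta> k h2 \<zeta>0"
    proof -
      have "egrad h1 \<zeta>0 = g + c *\<^sub>R egrad h2 \<zeta>0" by (simp add: g_def)
      then show ?thesis unfolding cov_grad_def nud P_def[symmetric] using Pg
        by (simp add: matrix_vector_right_distrib matrix_vector_mult_scaleR)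
    qed
    have sE1: "transpose (ehess h1 \<zeta>0) = ehess h1 \<zeta>0"
      using schwarz[OF U1(2) zU(1)] by (simp add: transpose_def ehess_def vec_eq_iff)
    have sE2: "transpose (ehess h2 \<zeta>0) = ehess h2 \<zeta>0"
      using schwarz[OF U2(2) zU(2)] by (simp add: transpose_def ehess_def vec_eq_iff)
    define W1 where "W1 = cov_W \<theta> k h1 \<zeta>0"
    define W2 where "W2 = cov_W \<theta> k h2 \<zeta>0"
    have nn': "norm (cap_normal \<theta> k \<zeta>0) = 1" using n1 nud by simp
    have sW1: "transpose W1 = W1" unfolding W1_def by (rule covW_sym[OF sE1])
    have sW2: "transpose W2 = W2" unfolding W2_def by (rule covW_sym[OF sE2])
    have qW1: "x \<bullet> (W1 *v x) = (P *v x) \<bullet> (ehess h1 \<zeta>0 *v (P *v x))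
       - (egrad h1 \<zeta>0 \<bullet> \<nu>) * ((P *v x) \<bullet> (P *v x)) + h1 \<zeta>0 * ((P *v x) \<bullet> (P *v x))" for x
      using quadW[OF nn', of x h1] unfolding W1_def nud P_def .
    have qW2: "x \<bullet> (W2 *v x) = (P *v x) \<bullet> (ehess h2 \<zeta>0 *v (P *v x))
       - (egrad h2 \<zeta>0 \<bullet> \<nu>) * ((P *v x) \<bullet> (P *v x)) + h2 \<zeta>0 * ((P *v x) \<bullet> (P *v x))" for x
      using quadW[OF nn', of x h2] unfolding W2_def nud P_def .
    have yP: "P *v (P *v x) = P *v x" for x using tproj_idem_v[OF n1] by (simp add: P_def)
    have yn: "(P *v x) \<bullet> \<nu> = 0" for x using tproj_perp[OF n1] by (simp add: P_def)
    have posA: "x \<bullet> ((W1 + outer \<nu> \<nu>) *v x) > 0" if x: "x \<noteq> 0" for x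
    proof -
      define y where "y = P *v x"
      have qy: "x \<bullet> (W1 *v x) = y \<bullet> (W1 *v y)" using qW1[of x] qW1[of y] yP[of x] by (simp add: y_def)
      have ox: "x \<bullet> (outer \<nu> \<nu> *v x) = (\<nu> \<bullet> x)\<^sup>2" by (simp add: outer_mv' power2_eq_square inner_commute)
      have eq: "x \<bullet> ((W1 + outer \<nu> \<nu>) *v x) = y \<bullet> (W1 *v y) + (\<nu> \<bullet> x)\<^sup>2"
        by (simp add: matrix_vector_mult_add_rdistrib inner_add_right qy ox)
      show ?thesis
      proof (cases "y = 0")
        case True
        have "x = (\<nu> \<bullet> x) *\<^sub>R \<nu>" using True by (simp add: y_def P_def tproj_mv)
        then have "\<nu> \<bullet> x \<noteq> 0" using x by (metis scale_zero_left)
        then show ?thesis unfolding eq using True by simp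
      next
        case False
        have sc: "\<forall>v. v \<bullet> cap_normal \<theta> k \<zeta>0 = 0 \<and> v \<noteq> 0 \<longrightarrow> 0 < v \<bullet> (cov_W \<theta> k h1 \<zeta>0 *v v)"
          using cv1 z0 unfolding strictly_convex_cap_def by blast
        have "y \<bullet> (W1 *v y) > 0"
          using sc[unfolded nud] False yn[of x] unfolding W1_def y_def by blast
        then show ?thesis unfolding eq by (simp add: add_pos_nonneg)
      qed
    qed
    have psdC: "x \<bullet> ((c *\<^sub>R W2 - W1) *v x) \<ge> 0" for x
    proof -
      define y where "y = P *v x"
      have "x \<bullet> ((c *\<^sub>R W2 - W1) *v x) = c * (x \<bullet> (W2 *v x)) - x \<bullet> (W1 *v x)"
        by (simp add: matrix_vector_mult_diff_rdistrib scaleR_mv inner_diff_right)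
      also have "\<dots> = - Qf y"
        unfolding qW1 qW2 y_def[symmetric] Qf_def H_def g_def hc
        by (simp add: matrix_vector_mult_diff_rdistrib scaleR_mv inner_diff_right inner_diff_left algebra_simps)
      finally show ?thesis using Qneg[OF yn[of x]] by (simp add: y_def)
    qed
    have symA: "transpose (W1 + outer \<nu> \<nu>) = W1 + outer \<nu> \<nu>"
      by (simp add: transpose_add' sW1 transpose_outer)
    have symC: "transpose (c *\<^sub>R W2 - W1) = c *\<^sub>R W2 - W1"
      by (simp add: transpose_diff' transpose_scalar sW1 sW2)
    have "det (W1 + outer \<nu> \<nu>) \<le> det ((W1 + outer \<nu> \<nu>) + (c *\<^sub>R W2 - W1))"
      by (rule det_mono_psd[OF symA symC posA psdC])
    also have "(W1 + outer \<nu> \<nu>) + (c *\<^sub>R W2 - W1) = c *\<^sub>R W2 + outer \<nu> \<nu>" by simp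
    also have "det (c *\<^sub>R W2 + outer \<nu> \<nu>) = c ^ (CARD('m) - 1) * det (W2 + outer \<nu> \<nu>)"
      using det_scale_tangent[OF n1, of W2 c] covW_P[OF nn', of h2] by (simp add: W2_def nud)
    finally have detle: "cov_det \<theta> k h1 \<zeta>0 \<le> c ^ (CARD('m) - 1) * cov_det \<theta> k h2 \<zeta>0"
      by (simp add: cov_det_def nud W1_def W2_def)
    have eqz: "cov_det \<theta> k h \<zeta>0 = RHS h \<zeta>0"
      if hU: "cinf_on U h" "cap \<theta> k \<subseteq> U" and heq: "\<And>\<zeta>. \<zeta> \<in> cap_interior \<theta> k \<Longrightarrow> cov_det \<theta> k h \<zeta> = RHS h \<zeta>"
        and hp: "h \<zeta>0 > 0" for h U
    proof (cases "\<zeta>0 $ k > 0")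
      case True
      then show ?thesis using heq z0 by (simp add: cap_interior_def)
    next
      case False
      then have zk: "\<zeta>0 $ k = 0" using z0 by (simp add: cap_def)
      have nuk': "\<nu> $ k = cos \<theta>" using nuk zk by simp
      define w0 where "w0 = P *v axis k 1"
      have w0e: "w0 = axis k 1 - cos \<theta> *\<^sub>R \<nu>"
        by (simp add: w0_def P_def tproj_mv inner_axis nuk')
      have w0n: "w0 \<bullet> \<nu> = 0" unfolding w0_def P_def by (rule tproj_perp[OF n1])
      have sth: "sin \<theta> > 0" using th0 th1 by (intro sin_gt_zero) auto
      have w0k: "w0 $ k = (sin \<theta>)\<^sup>2"
        using sin_cos_squared_add2[of \<theta>] by (simp add: w0e nuk' power2_eq_square algebra_simps)
      have w0kp: "w0 $ k > 0" using w0k sth by simp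
      have w0nz: "w0 \<noteq> 0" using w0kp by auto
      define v0 where "v0 = (1 / norm w0) *\<^sub>R w0"
      have v0: "v0 \<bullet> \<nu> = 0" "norm v0 = 1" "v0 $ k > 0" using w0n w0nz w0kp by (auto simp: v0_def)
      obtain d where d: "d > 0" "\<And>t. 0 < t \<Longrightarrow> t < d \<Longrightarrow> C + cos t *\<^sub>R \<nu> + sin t *\<^sub>R v0 \<in> cap_interior \<theta> k"
        using cap_curve_in[of \<theta> k \<nu> v0] z0 v0 zC unfolding C_def by auto
      define \<gamma> where "\<gamma> t = C + cos t *\<^sub>R \<nu> + sin t *\<^sub>R v0" for t
      have g0: "\<gamma> 0 = \<zeta>0" using zC by (simp add: \<gamma>_def)
      have gc: "continuous (at 0) \<gamma>" unfolding \<gamma>_def by (intro continuous_intros)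
      have oU: "open U" using hU by (simp add: cinf_on_def)
      have zU': "\<gamma> 0 \<in> U" "\<gamma> 0 \<in> Uf" using g0 z0 hU Uf by auto
      have chU: "continuous_on U h" using cinf_C1[OF hU(1)] by (simp add: C1on_def)
      have L1: "((\<lambda>t. cov_det \<theta> k h (\<gamma> t)) \<longlongrightarrow> cov_det \<theta> k h \<zeta>0) (at_right 0)"
        using tends_along[OF oU cont_cov_det[OF hU(1)] zU'(1) gc] g0 by simp
      have Tf: "((\<lambda>t. f (\<gamma> t)) \<longlongrightarrow> f \<zeta>0) (at_right 0)"
        using tends_along[OF oUf chf zU'(2) gc] g0 by simp
      have Th: "((\<lambda>t. h (\<gamma> t)) \<longlongrightarrow> h \<zeta>0) (at_right 0)"
        using tends_along[OF oU chU zU'(1) gc] g0 by simp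
      have Tg: "((\<lambda>t. cov_grad \<theta> k h (\<gamma> t)) \<longlongrightarrow> cov_grad \<theta> k h \<zeta>0) (at_right 0)"
        using tends_along[OF oU cont_cov_grad[OF hU(1)] zU'(1) gc] g0 by simp
      have Xpos: "(h \<zeta>0)\<^sup>2 + (norm (cov_grad \<theta> k h \<zeta>0))\<^sup>2 \<noteq> 0" using hp
        by (metis add_pos_nonneg less_irrefl zero_less_power2 zero_le_power2)
      have L2: "((\<lambda>t. RHS h (\<gamma> t)) \<longlongrightarrow> RHS h \<zeta>0) (at_right 0)"
        unfolding RHS_def using hp Xpos
        by (intro tendsto_intros tendsto_powr Tf Th Tg) auto
      have ev: "\<forall>\<^sub>F t in at_right 0. cov_det \<theta> k h (\<gamma> t) = RHS h (\<gamma> t)"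
      proof -
        have "\<forall>\<^sub>F t in at_right (0::real). 0 < t \<and> t < d"
          using d(1) by (simp add: eventually_at_right_field) (metis)
        then show ?thesis
          by (rule eventually_mono) (use d(2) heq in \<open>auto simp: \<gamma>_def\<close>)
      qed
      have "((\<lambda>t. cov_det \<theta> k h (\<gamma> t)) \<longlongrightarrow> RHS h \<zeta>0) (at_right 0)"
        using L2 tendsto_cong[OF ev] by blast
      from tendsto_unique[OF _ L1 this] show ?thesis by simp
    qed
    have E1: "cov_det \<theta> k h1 \<zeta>0 = RHS h1 \<zeta>0" by (rule eqz[OF U1(2) U1(1) eq1 h1pos[OF z0]])
    have E2: "cov_det \<theta> k h2 \<zeta>0 = RHS h2 \<zeta>0" by (rule eqz[OF U2(2) U2(1) eq2 h2pos[OF z0]])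
    show ?thesis
    proof (rule ccontr)
      assume "\<not> c \<le> 1"
      then have c1: "c > 1" by simp
      define a where "a = h2 \<zeta>0"
      define G where "G = norm (cov_grad \<theta> k h2 \<zeta>0)"
      define X where "X = a\<^sup>2 + G\<^sup>2"
      define \<alpha> where "\<alpha> = (N - q) / 2"
      have apos: "a > 0" using h2pos[OF z0] by (simp add: a_def)
      have Xpos: "X > 0" using apos by (simp add: X_def add_pos_nonneg)
      have fz: "f \<zeta>0 > 0" using fpos z0 by blast
      have ng1: "norm (cov_grad \<theta> k h1 \<zeta>0) = c * G" using cg cpos by (simp add: G_def)
      have R2: "RHS h2 \<zeta>0 = f \<zeta>0 * a powr (p - 1) * X powr \<alpha>"
        by (simp add: RHS_def a_def G_def X_def \<alpha>_def)
      have R2pos: "RHS h2 \<zeta>0 > 0" unfolding R2 using fz apos Xpos by simp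
      have cX: "(c * a)\<^sup>2 + (c * G)\<^sup>2 = c\<^sup>2 * X" by (simp add: X_def power_mult_distrib algebra_simps)
      have c2: "(c\<^sup>2) powr \<alpha> = c powr (2 * \<alpha>)"
      proof -
        have "c\<^sup>2 = c powr 2" using cpos by (simp add: powr_numeral)
        then show ?thesis by (simp only: powr_powr)
      qed
      have "RHS h1 \<zeta>0 = f \<zeta>0 * (c * a) powr (p - 1) * ((c * a)\<^sup>2 + (c * G)\<^sup>2) powr \<alpha>"
        by (simp add: RHS_def hc a_def ng1 \<alpha>_def)
      also have "\<dots> = c powr (p - 1 + 2 * \<alpha>) * RHS h2 \<zeta>0"
      proof -
        have m1: "(c * a) powr (p - 1) = c powr (p - 1) * a powr (p - 1)" by (rule powr_mult)
        have m2: "(c\<^sup>2 * X) powr \<alpha> = (c\<^sup>2) powr \<alpha> * X powr \<alpha>" by (rule powr_mult)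
        have m3: "c powr (p - 1 + 2 * \<alpha>) = c powr (p - 1) * c powr (2 * \<alpha>)" by (rule powr_add)
        show ?thesis unfolding cX R2 m1 m2 m3 c2 by (simp only: mult_ac)
      qed
      finally have R1: "RHS h1 \<zeta>0 = c powr (p - 1 + 2 * \<alpha>) * RHS h2 \<zeta>0" .
      have "c powr (p - 1 + 2 * \<alpha>) * RHS h2 \<zeta>0 \<le> c ^ (CARD('m) - 1) * RHS h2 \<zeta>0"
        using detle E1 E2 R1 by simp
      then have le1: "c powr (p - 1 + 2 * \<alpha>) \<le> c ^ (CARD('m) - 1)" using R2pos by simp
      have "c ^ (CARD('m) - 1) = c powr (real (CARD('m) - 1))" using powr_realpow[OF cpos, of "CARD('m) - 1"] by (rule sym)
      also have "real (CARD('m) - 1) = N - 1" by (simp add: N_def of_nat_diff)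
      finally have "c powr (p - 1 + 2 * \<alpha>) \<le> c powr (N - 1)" using le1 by simp
      moreover have "c powr (N - 1) < c powr (p - 1 + 2 * \<alpha>)"
        using pq c1 by (intro powr_less_mono) (auto simp: \<alpha>_def field_simps)
      ultimately show False by simp
    qed
  qed
  show ?thesis
  proof
    fix \<zeta> assume z: "\<zeta> \<in> cap \<theta> k"
    have "h1 \<zeta> / h2 \<zeta> \<le> 1" using zmax[OF z] cle by (simp add: c_def)
    then show "h1 \<zeta> \<le> h2 \<zeta>" using h2pos[OF z] by (simp add: divide_le_eq)
  qed
qed


theorem lemma5p7:
  fixes k :: "'m::finite" and \<theta> p q :: real and f h1 h2 :: "real^'m \<Rightarrow> real"
  assumes "CARD('m) \<ge> 2"
    and "p > q"
    and "0 < \<theta>" and "\<theta> < pi / 2"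
    and "smooth_upto (cap \<theta> k) f" and "\<forall>\<zeta>\<in>cap \<theta> k. f \<zeta> > 0"
    and "is_cap_solution \<theta> k p q f h1"
    and "is_cap_solution \<theta> k p q f h2"
  shows "\<forall>\<zeta>\<in>cap \<theta> k. h1 \<zeta> = h2 \<zeta>"
proof -
  have A: "\<forall>\<zeta>\<in>cap \<theta> k. h1 \<zeta> \<le> h2 \<zeta>"
    by (rule key_le[OF assms(3,4,2,5,6,7,8)])
  have B: "\<forall>\<zeta>\<in>cap \<theta> k. h2 \<zeta> \<le> h1 \<zeta>"
    by (rule key_le[OF assms(3,4,2,5,6,8,7)])
  show ?thesis using A B by (meson antisym)
qed

end
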